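(* Let $\Pi=(P,\mathcal{L})$ and $\Pi'=(P',\mathcal{L}')$ be $n$-dimensional linear spaces, $n\ge 4$, both satisfying the exchange axiom and the axiom (P2), and let $k\ge 0$ be an integer with $n>2k+1$. Let $f$ be a bijection of $\mathcal{G}_{k}(\Pi)$ to $\mathcal{G}_{k}(\Pi')$ such that both $f$ and $f^{-1}$ send base subsets to base subsets. Then there is a collineation $g$ of $\Pi$ to $\Pi'$ with $f(S)=g(S)$ for all $S\in\mathcal{G}_k(\Pi)$.
   Context: A linear space $\Pi=(P,\mathcal{L})$ is a set $P$ of points with a family $\mathcal{L}$ of proper subsets (lines) such that each line has at least two points and any two distinct points $p,q$ lie on exactly one line $pq$. A subspace is a set $S\subset P$ with $pq\subset S$ for all distinct $p,q\in S$; $\overline{X}$ is the smallest subspace containing $X$. A set $X$ is independent if $\overline{X}$ is not spanned by a proper subset of $X$; a base of a subspace $S$ is an independent set spanning $S$. A subspace is $m$-dimensional if $m+1$ is the smallest number of points spanning it. Exchange axiom: for every $X\subset P$ and $p_1,p_2\in P\setminus\overline{X}$, $p_2\in\overline{X\cup\{p_1\}}$ implies $p_1\in\overline{X\cup\{p_2\}}$. Axiom (P2): every line contains at least three points. $\mathcal{G}_k(\Pi)$ is the set of $k$-dimensional subspaces. For a base $B$ of $\Pi$, the base subset of $\mathcal{G}_k(\Pi)$ associated with $B$ is the set of all $k$-dimensional subspaces spanned by points of $B$. A collineation of $\Pi$ to $\Pi'$ is a bijection $g:P\to P'$ with $g(\mathcal{L})=\mathcal{L}'$. *)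

theory Defs
  imports Main
begin

definition linear_space :: "'a set \<Rightarrow> 'a set set \<Rightarrow> bool" where
  "linear_space P L \<longleftrightarrow>
     (\<forall>l\<in>L. l \<subset> P) \<and>
     (\<forall>l\<in>L. \<exists>p q. p \<in> l \<and> q \<in> l \<and> p \<noteq> q) \<and>
     (\<forall>p\<in>P. \<forall>q\<in>P. p \<noteq> q \<longrightarrow> (\<exists>!l. l \<in> L \<and> p \<in> l \<and> q \<in> l))"

definition line_through :: "'a set set \<Rightarrow> 'a \<Rightarrow> 'a \<Rightarrow> 'a set" where
  "line_through L p q = (THE l. l \<in> L \<and> p \<in> l \<and> q \<in> l)"

definition subspace :: "'a set \<Rightarrow> 'a set set \<Rightarrow> 'a set \<Rightarrow> bool" where
  "subspace P L S \<longleftrightarrow> S \<subseteq> P \<and>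
     (\<forall>p\<in>S. \<forall>q\<in>S. p \<noteq> q \<longrightarrow> line_through L p q \<subseteq> S)"

definition span :: "'a set \<Rightarrow> 'a set set \<Rightarrow> 'a set \<Rightarrow> 'a set" where
  "span P L X = \<Inter>{S. subspace P L S \<and> X \<subseteq> S}"

definition independent :: "'a set \<Rightarrow> 'a set set \<Rightarrow> 'a set \<Rightarrow> bool" where
  "independent P L X \<longleftrightarrow> X \<subseteq> P \<and> (\<forall>Y. Y \<subset> X \<longrightarrow> span P L Y \<noteq> span P L X)"

definition base_of :: "'a set \<Rightarrow> 'a set set \<Rightarrow> 'a set \<Rightarrow> 'a set \<Rightarrow> bool" where
  "base_of P L S B \<longleftrightarrow> independent P L B \<and> span P L B = S"

definition base :: "'a set \<Rightarrow> 'a set set \<Rightarrow> 'a set \<Rightarrow> bool" where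
  "base P L B \<longleftrightarrow> base_of P L P B"

definition has_dim :: "'a set \<Rightarrow> 'a set set \<Rightarrow> 'a set \<Rightarrow> nat \<Rightarrow> bool" where
  "has_dim P L S m \<longleftrightarrow> subspace P L S \<and>
     (\<exists>X. finite X \<and> X \<subseteq> P \<and> card X = m + 1 \<and> span P L X = S) \<and>
     (\<forall>X. finite X \<and> X \<subseteq> P \<and> span P L X = S \<longrightarrow> m + 1 \<le> card X)"

definition exchange_axiom :: "'a set \<Rightarrow> 'a set set \<Rightarrow> bool" where
  "exchange_axiom P L \<longleftrightarrow>
     (\<forall>X p1 p2. X \<subseteq> P \<and> p1 \<in> P - span P L X \<and> p2 \<in> P - span P L X \<and>
        p2 \<in> span P L (X \<union> {p1}) \<longrightarrow> p1 \<in> span P L (X \<union> {p2}))"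

definition axiom_P2 :: "'a set set \<Rightarrow> bool" where
  "axiom_P2 L \<longleftrightarrow> (\<forall>l\<in>L. \<exists>a b c. a \<in> l \<and> b \<in> l \<and> c \<in> l \<and> a \<noteq> b \<and> a \<noteq> c \<and> b \<noteq> c)"

definition Grass :: "'a set \<Rightarrow> 'a set set \<Rightarrow> nat \<Rightarrow> 'a set set" where
  "Grass P L k = {S. has_dim P L S k}"

definition base_subset :: "'a set \<Rightarrow> 'a set set \<Rightarrow> nat \<Rightarrow> 'a set \<Rightarrow> 'a set set" where
  "base_subset P L k B = {S \<in> Grass P L k. \<exists>X. X \<subseteq> B \<and> span P L X = S}"

definition is_base_subset :: "'a set \<Rightarrow> 'a set set \<Rightarrow> nat \<Rightarrow> 'a set set \<Rightarrow> bool" where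
  "is_base_subset P L k A \<longleftrightarrow> (\<exists>B. base P L B \<and> A = base_subset P L k B)"

definition collineation :: "'a set \<Rightarrow> 'a set set \<Rightarrow> 'b set \<Rightarrow> 'b set set \<Rightarrow> ('a \<Rightarrow> 'b) \<Rightarrow> bool" where
  "collineation P L P' L' g \<longleftrightarrow> bij_betw g P P' \<and> (\<lambda>l. g ` l) ` L = L'"

end

theory Submission
  imports Defs
begin


lemma my_binom_less:
  assumes k: "k < n div 2"
  shows "n choose k < n choose (Suc k)"
proof -
  have e: "Suc k * (n choose Suc k) = (n - k) * (n choose k)"
    using binomial_absorption binomial_absorb_comp by simp
  have pos: "n choose k > 0" using k by simp
  have "Suc k < n - k" using k by linarith
  then have "Suc k * (n choose k) < (n - k) * (n choose k)" using pos by (rule mult_strict_right_mono)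
  then have "Suc k * (n choose k) < Suc k * (n choose Suc k)" using e by simp
  then show ?thesis by (meson mult_less_cancel1)
qed

definition Sk :: "'a set \<Rightarrow> nat \<Rightarrow> 'a set set" where
  "Sk B m = {X. X \<subseteq> B \<and> card X = m}"

definition Cij :: "'a set \<Rightarrow> nat \<Rightarrow> 'a \<Rightarrow> 'a \<Rightarrow> 'a set set" where
  "Cij B m i j = {X \<in> Sk B m. j \<in> X \<and> i \<notin> X}"

definition bad :: "'a set \<Rightarrow> 'a set set \<Rightarrow> bool" where
  "bad B F \<longleftrightarrow> (\<exists>i\<in>B. \<exists>j\<in>B. i \<noteq> j \<and> (\<forall>X\<in>F. j \<in> X \<longrightarrow> i \<in> X))"

lemma card_InOut:
  assumes "finite B" "In \<subseteq> B" "Out \<subseteq> B" "In \<inter> Out = {}" "card In \<le> m"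
  shows "card {X \<in> Sk B m. In \<subseteq> X \<and> X \<inter> Out = {}} = (card B - card In - card Out) choose (m - card In)"
proof -
  have fI: "finite In" "finite Out" using assms by (meson finite_subset)+
  have "bij_betw (\<lambda>X. X - In) {X \<in> Sk B m. In \<subseteq> X \<and> X \<inter> Out = {}} (Sk (B - In - Out) (m - card In))"
  proof (rule bij_betw_byWitness[where f'="\<lambda>Y. Y \<union> In"])
    show "(\<lambda>X. X - In) ` {X \<in> Sk B m. In \<subseteq> X \<and> X \<inter> Out = {}} \<subseteq> Sk (B - In - Out) (m - card In)"
    proof
      fix Z assume "Z \<in> (\<lambda>X. X - In) ` {X \<in> Sk B m. In \<subseteq> X \<and> X \<inter> Out = {}}"
      then obtain X where X: "X \<in> {X \<in> Sk B m. In \<subseteq> X \<and> X \<inter> Out = {}}" and Z: "Z = X - In" by auto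
      then have "finite X" using assms(1) finite_subset unfolding Sk_def by auto
      then show "Z \<in> Sk (B - In - Out) (m - card In)" using X fI Z
        unfolding Sk_def by (auto simp: card_Diff_subset)
    qed
    show "(\<lambda>Y. Y \<union> In) ` Sk (B - In - Out) (m - card In) \<subseteq> {X \<in> Sk B m. In \<subseteq> X \<and> X \<inter> Out = {}}"
    proof
      fix Z assume "Z \<in> (\<lambda>Y. Y \<union> In) ` Sk (B - In - Out) (m - card In)"
      then obtain Y where Y: "Y \<in> Sk (B - In - Out) (m - card In)" and Z: "Z = Y \<union> In" by auto
      then have "finite Y" using assms(1) finite_subset unfolding Sk_def by auto
      moreover have "Y \<inter> In = {}" using Y unfolding Sk_def by auto
      ultimately have "card (Y \<union> In) = m" using Y fI assms(5) unfolding Sk_def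
        by (simp add: card_Un_disjoint)
      then show "Z \<in> {X \<in> Sk B m. In \<subseteq> X \<and> X \<inter> Out = {}}" using Y assms Z
        unfolding Sk_def by auto
    qed
  qed (auto simp: Sk_def)
  then have "card {X \<in> Sk B m. In \<subseteq> X \<and> X \<inter> Out = {}} = card (Sk (B - In - Out) (m - card In))"
    by (rule bij_betw_same_card)
  also have "\<dots> = card (B - In - Out) choose (m - card In)"
    unfolding Sk_def using assms(1) by (simp add: n_subsets)
  also have "card (B - In - Out) = card B - card In - card Out"
  proof -
    have "B - In - Out = B - (In \<union> Out)" by auto
    moreover have "card (In \<union> Out) = card In + card Out" using fI assms(4) by (simp add: card_Un_disjoint)
    ultimately show ?thesis using assms fI by (simp add: card_Diff_subset)
  qed
  finally show ?thesis .
qed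


lemma choose_le_Suc: "n choose k \<le> Suc n choose k"
  by (cases k) (simp_all)

lemma Cij_Int: "Cij B m i j \<inter> Cij B m i' j' = {X \<in> Sk B m. {j,j'} \<subseteq> X \<and> X \<inter> {i,i'} = {}}"
  unfolding Cij_def by auto

lemma card_CC:
  assumes "finite B" "i \<in> B" "j \<in> B" "i' \<in> B" "j' \<in> B" "{j,j'} \<inter> {i,i'} = {}" "card {j,j'} \<le> m"
  shows "card (Cij B m i j \<inter> Cij B m i' j') = (card B - card {j,j'} - card {i,i'}) choose (m - card {j,j'})"
  unfolding Cij_Int using assms by (intro card_InOut) auto

lemma CC_empty: "j = i' \<or> i = j' \<Longrightarrow> Cij B m i j \<inter> Cij B m i' j' = {}"
  unfolding Cij_def by auto

lemma Cij_sub: "Cij B m i j \<subseteq> Sk B m"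
  unfolding Cij_def by auto

lemma exists_Sk:
  assumes "finite B" "In \<subseteq> B" "Out \<subseteq> B" "In \<inter> Out = {}" "card In \<le> m" "m + card Out \<le> card B"
  obtains X where "X \<in> Sk B m" "In \<subseteq> X" "X \<inter> Out = {}"
proof -
  have fI: "finite In" "finite Out" using assms by (meson finite_subset)+
  have "card (B - In - Out) = card B - card In - card Out"
  proof -
    have "B - In - Out = B - (In \<union> Out)" by auto
    moreover have "card (In \<union> Out) = card In + card Out" using fI assms(4) by (simp add: card_Un_disjoint)
    ultimately show ?thesis using assms fI by (simp add: card_Diff_subset)
  qed
  then have "m - card In \<le> card (B - In - Out)" using assms by linarith
  then obtain Y where Y: "Y \<subseteq> B - In - Out" "card Y = m - card In" "finite Y"
    by (meson obtain_subset_with_card_n)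
  have "card (Y \<union> In) = m" using Y fI assms(5) by (subst card_Un_disjoint) auto
  then show ?thesis using Y assms by (intro that[of "Y \<union> In"]) (auto simp: Sk_def)
qed

lemma C_incl:
  assumes "finite B" "m + 2 \<le> card B" "2 \<le> m"
    "c \<in> B" "d \<in> B" "i \<in> B" "j \<in> B" "c \<noteq> d" "i \<noteq> j"
    "Cij B m c d \<subseteq> Cij B m i j"
  shows "c = i \<and> d = j"
proof -
  have dj: "d = j"
  proof (rule ccontr)
    assume "d \<noteq> j"
    obtain X where "X \<in> Sk B m" "{d} \<subseteq> X" "X \<inter> {c,j} = {}"
      apply (rule exists_Sk[of B "{d}" "{c,j}" m])
      using assms \<open>d \<noteq> j\<close> by (auto simp: card_insert_if)
    then have "X \<in> Cij B m c d" "X \<notin> Cij B m i j" unfolding Cij_def by auto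
    then show False using assms(10) by auto
  qed
  have "c = i"
  proof (rule ccontr)
    assume "c \<noteq> i"
    obtain X where "X \<in> Sk B m" "{d,i} \<subseteq> X" "X \<inter> {c} = {}"
      apply (rule exists_Sk[of B "{d,i}" "{c}" m])
      using assms \<open>c \<noteq> i\<close> dj by (auto simp: card_insert_if)
    then have "X \<in> Cij B m c d" "X \<notin> Cij B m i j" unfolding Cij_def by auto
    then show False using assms(10) by auto
  qed
  with dj show ?thesis by simp
qed

lemma C_eq:
  assumes "finite B" "m + 2 \<le> card B" "2 \<le> m"
    "c \<in> B" "d \<in> B" "i \<in> B" "j \<in> B" "c \<noteq> d" "i \<noteq> j"
    "Cij B m c d = Cij B m i j"
  shows "c = i \<and> d = j"
  using C_incl[OF assms(1-9)] assms(10) by simp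

lemma step1a:
  assumes bij: "bij_betw \<phi> (Sk B m) (Sk B' m)"
    and bd: "\<forall>F \<subseteq> Sk B m. bad B F \<longrightarrow> bad B' (\<phi> ` F)"
    and ij: "i \<in> B" "j \<in> B" "i \<noteq> j"
  shows "\<exists>a\<in>B'. \<exists>b\<in>B'. a \<noteq> b \<and> Cij B' m a b \<subseteq> \<phi> ` Cij B m i j"
proof -
  let ?F = "Sk B m - Cij B m i j"
  have "bad B ?F" unfolding bad_def Cij_def using ij by blast
  then have "bad B' (\<phi> ` ?F)" using bd by blast
  then obtain a b where ab: "a \<in> B'" "b \<in> B'" "a \<noteq> b" "\<forall>Y\<in>\<phi> ` ?F. b \<in> Y \<longrightarrow> a \<in> Y"
    unfolding bad_def by blast
  have "Cij B' m a b \<subseteq> \<phi> ` Cij B m i j"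
  proof
    fix Y assume Y: "Y \<in> Cij B' m a b"
    then have "Y \<in> Sk B' m" unfolding Cij_def by auto
    then obtain X where X: "X \<in> Sk B m" "Y = \<phi> X" using bij unfolding bij_betw_def by auto
    show "Y \<in> \<phi> ` Cij B m i j"
    proof (cases "X \<in> Cij B m i j")
      case True then show ?thesis using X by auto
    next
      case False
      then have "Y \<in> \<phi> ` ?F" using X by auto
      then show ?thesis using ab Y unfolding Cij_def by auto
    qed
  qed
  then show ?thesis using ab by blast
qed


lemma comb_main:
  assumes fin: "finite B" "finite B'" and cB: "card B = N" "card B' = N"
    and m: "2 \<le> m" "2*m < N"
    and bij: "bij_betw \<phi> (Sk B m) (Sk B' m)"
    and bd: "\<forall>F \<subseteq> Sk B m. bad B F \<longleftrightarrow> bad B' (\<phi> ` F)"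
  shows "\<exists>\<sigma>. bij_betw \<sigma> B B' \<and> (\<forall>X\<in>Sk B m. \<phi> X = \<sigma> ` X)"
proof -
  define K where "K = (N - 3) choose (m - 1)"
  have Kpos: "0 < K" unfolding K_def using m by simp
  have K1: "(N - 3) choose (m - 2) < K"
  proof -
    have "(N - 3) choose (m - 2) < (N - 3) choose Suc (m - 2)"
      by (rule my_binom_less) (use m in linarith)
    moreover have "Suc (m - 2) = m - 1" using m by simp
    ultimately show ?thesis unfolding K_def by simp
  qed
  have K2: "(N - 4) choose (m - 2) < K"
  proof -
    have "N - 3 = Suc (N - 4)" using m by simp
    then have "(N - 4) choose (m - 2) \<le> (N - 3) choose (m - 2)" using choose_le_Suc by metis
    then show ?thesis using K1 by linarith
  qed
  have mN: "m + 2 \<le> card B" "m + 2 \<le> card B'" using m cB by auto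
  have inj: "inj_on \<phi> (Sk B m)" and im: "\<phi> ` Sk B m = Sk B' m" using bij unfolding bij_betw_def by auto
  define \<psi> where "\<psi> = inv_into (Sk B m) \<phi>"
  have bijpsi: "bij_betw \<psi> (Sk B' m) (Sk B m)" unfolding \<psi>_def using bij by (rule bij_betw_inv_into)
  have bd1: "\<forall>F \<subseteq> Sk B m. bad B F \<longrightarrow> bad B' (\<phi> ` F)" using bd by blast
  have bd2: "\<forall>G \<subseteq> Sk B' m. bad B' G \<longrightarrow> bad B (\<psi> ` G)"
  proof (intro allI impI)
    fix G assume G: "G \<subseteq> Sk B' m" "bad B' G"
    have sub: "\<psi> ` G \<subseteq> Sk B m" using bijpsi G unfolding bij_betw_def by auto
    have "\<phi> ` \<psi> ` G = G" unfolding \<psi>_def using im G by (simp add: image_inv_into_cancel)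
    then show "bad B (\<psi> ` G)" using bd sub G by metis
  qed
  have psiphi: "\<psi> ` \<phi> ` S = S" if "S \<subseteq> Sk B m" for S
    unfolding \<psi>_def using inj that by (simp add: inv_into_image_cancel)
  have phipsi: "\<phi> ` \<psi> ` S = S" if "S \<subseteq> Sk B' m" for S
    unfolding \<psi>_def using im that by (simp add: image_inv_into_cancel)
  have step1: "\<exists>a\<in>B'. \<exists>b\<in>B'. a \<noteq> b \<and> \<phi> ` Cij B m i j = Cij B' m a b"
    if ij: "i \<in> B" "j \<in> B" "i \<noteq> j" for i j
  proof -
    obtain a b where ab: "a \<in> B'" "b \<in> B'" "a \<noteq> b" "Cij B' m a b \<subseteq> \<phi> ` Cij B m i j"
      using step1a[OF bij bd1 ij] by blast
    obtain c d where cd: "c \<in> B" "d \<in> B" "c \<noteq> d" "Cij B m c d \<subseteq> \<psi> ` Cij B' m a b"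
      using step1a[OF bijpsi bd2 ab(1-3)] by blast
    have "\<psi> ` Cij B' m a b \<subseteq> \<psi> ` \<phi> ` Cij B m i j" using ab(4) by (rule image_mono)
    also have "\<dots> = Cij B m i j" by (rule psiphi[OF Cij_sub])
    finally have "Cij B m c d \<subseteq> Cij B m i j" using cd(4) by (rule order_trans[rotated])
    then have "c = i \<and> d = j" by (rule C_incl[OF fin(1) mN(1) m(1) cd(1,2) ij(1,2) cd(3) ij(3)])
    then have "Cij B m i j \<subseteq> \<psi> ` Cij B' m a b" using cd by simp
    then have "\<phi> ` Cij B m i j \<subseteq> \<phi> ` \<psi> ` Cij B' m a b" by (rule image_mono)
    also have "\<dots> = Cij B' m a b" by (rule phipsi[OF Cij_sub])
    finally show ?thesis using ab by blast
  qed
  have cardimg: "card (\<phi> ` Cij B m i j \<inter> \<phi> ` Cij B m i' j') = card (Cij B m i j \<inter> Cij B m i' j')" for i j i' j'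
  proof -
    have "\<phi> ` Cij B m i j \<inter> \<phi> ` Cij B m i' j' = \<phi> ` (Cij B m i j \<inter> Cij B m i' j')"
      using inj Cij_sub by (metis inj_on_image_Int)
    moreover have "inj_on \<phi> (Cij B m i j \<inter> Cij B m i' j')" using inj Cij_sub by (meson inf.coboundedI1 inj_on_subset)
    ultimately show ?thesis by (simp add: card_image)
  qed
  have phiCinj: "\<phi> ` Cij B m i j = \<phi> ` Cij B m i' j' \<Longrightarrow> Cij B m i j = Cij B m i' j'" for i j i' j'
    using inj Cij_sub by (metis inj_on_image_eq_iff)
  have step2: "\<exists>b\<in>B'. \<forall>i\<in>B. i \<noteq> j \<longrightarrow> (\<exists>a\<in>B'. a \<noteq> b \<and> \<phi> ` Cij B m i j = Cij B' m a b)"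
    if j: "j \<in> B" for j
  proof -
    have "card (B - {j}) \<ge> 1" using j mN fin by simp
    then have "B - {j} \<noteq> {}" by (metis card.empty not_one_le_zero)
    then obtain i0 where i0: "i0 \<in> B" "i0 \<noteq> j" by blast
    obtain a0 b0 where ab0: "a0 \<in> B'" "b0 \<in> B'" "a0 \<noteq> b0" "\<phi> ` Cij B m i0 j = Cij B' m a0 b0"
      using step1[OF i0(1) j i0(2)] by blast
    have "\<forall>i\<in>B. i \<noteq> j \<longrightarrow> (\<exists>a\<in>B'. a \<noteq> b0 \<and> \<phi> ` Cij B m i j = Cij B' m a b0)"
    proof (intro ballI impI)
      fix i assume i: "i \<in> B" "i \<noteq> j"
      obtain a b where ab: "a \<in> B'" "b \<in> B'" "a \<noteq> b" "\<phi> ` Cij B m i j = Cij B' m a b"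
        using step1[OF i(1) j i(2)] by blast
      have "b = b0"
      proof (rule ccontr)
        assume bb: "b \<noteq> b0"
        have "i \<noteq> i0"
        proof
          assume "i = i0"
          then have "Cij B' m a b = Cij B' m a0 b0" using ab ab0 by simp
          then show False using C_eq[OF fin(2) mN(2) m(1) ab(1,2) ab0(1,2) ab(3) ab0(3)] bb by blast
        qed
        have c1: "card (Cij B m i j \<inter> Cij B m i0 j) = K"
          unfolding K_def using card_CC[OF fin(1) i(1) j i0(1) j, of m] i i0 \<open>i \<noteq> i0\<close> m cB
          by (simp add: card_insert_if numeral_eq_Suc)
        have c2: "card (Cij B' m a b \<inter> Cij B' m a0 b0) < K"
        proof (cases "b = a0 \<or> a = b0")
          case True
          then show ?thesis using CC_empty[of b a0 a b0 B' m] Kpos by auto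
        next
          case False
          show ?thesis
          proof (cases "a = a0")
            case True
            then show ?thesis using card_CC[OF fin(2) ab(1,2) ab0(1,2), of m] False bb ab ab0 m cB K1
              by (simp add: card_insert_if numeral_eq_Suc)
          next
            case False2: False
            have "a0 \<noteq> b" "b0 \<noteq> a" using False by auto
            then show ?thesis using card_CC[OF fin(2) ab(1,2) ab0(1,2), of m] False2 False bb ab ab0 m cB K2
              by (simp add: card_insert_if numeral_eq_Suc)
          qed
        qed
        show False using c1 c2 cardimg[of i j i0 j] ab(4) ab0(4) by simp
      qed
      then show "\<exists>a\<in>B'. a \<noteq> b0 \<and> \<phi> ` Cij B m i j = Cij B' m a b0" using ab by blast
    qed
    then show ?thesis using ab0 by blast
  qed
  obtain \<sigma> where sig: "\<forall>j\<in>B. \<sigma> j \<in> B' \<and> (\<forall>i\<in>B. i \<noteq> j \<longrightarrow> (\<exists>a\<in>B'. a \<noteq> \<sigma> j \<and> \<phi> ` Cij B m i j = Cij B' m a (\<sigma> j)))"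
  proof -
    have ex: "\<forall>j\<in>B. \<exists>b. b \<in> B' \<and> (\<forall>i\<in>B. i \<noteq> j \<longrightarrow> (\<exists>a\<in>B'. a \<noteq> b \<and> \<phi> ` Cij B m i j = Cij B' m a b))"
      using step2 by blast
    show ?thesis using bchoice[OF ex] that by blast
  qed
  have step3: "\<sigma> j \<in> \<phi> X" if X: "X \<in> Sk B m" "j \<in> X" for X j
  proof -
    have "finite X" "card X = m" "X \<subseteq> B" using X fin finite_subset unfolding Sk_def by auto
    then have "X \<noteq> B" using cB m by auto
    then obtain i where i: "i \<in> B" "i \<notin> X" using \<open>X \<subseteq> B\<close> by blast
    have jB: "j \<in> B" using X \<open>X \<subseteq> B\<close> by auto
    have "i \<noteq> j" using i X by auto
    then obtain a where a: "\<phi> ` Cij B m i j = Cij B' m a (\<sigma> j)" using sig jB i by blast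
    have "X \<in> Cij B m i j" using X i unfolding Cij_def by auto
    then have "\<phi> X \<in> Cij B' m a (\<sigma> j)" using a by blast
    then show ?thesis unfolding Cij_def by auto
  qed
  have injs: "inj_on \<sigma> B"
  proof
    fix j j' assume jj: "j \<in> B" "j' \<in> B" "\<sigma> j = \<sigma> j'"
    show "j = j'"
    proof (rule ccontr)
      assume ne: "j \<noteq> j'"
      have "card {j,j'} \<le> 2" by (simp add: card_insert_if)
      then have "card (B - {j,j'}) \<ge> 1" using jj mN fin m by (simp add: card_Diff_subset)
      then have "B - {j,j'} \<noteq> {}" by (metis card.empty not_one_le_zero)
      then obtain i where i: "i \<in> B" "i \<noteq> j" "i \<noteq> j'" by blast
      obtain a where a: "a \<in> B'" "a \<noteq> \<sigma> j" "\<phi> ` Cij B m i j = Cij B' m a (\<sigma> j)" using sig jj i by blast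
      obtain a' where a': "a' \<in> B'" "a' \<noteq> \<sigma> j" "\<phi> ` Cij B m i j' = Cij B' m a' (\<sigma> j)" using sig jj i by metis
      have "a \<noteq> a'"
      proof
        assume "a = a'"
        then have "Cij B m i j = Cij B m i j'" using a a' phiCinj by metis
        then show False using C_eq[OF fin(1) mN(1) m(1) i(1) jj(1) i(1) jj(2)] i ne by blast
      qed
      have sj: "\<sigma> j \<in> B'" using sig jj by blast
      have c1: "card (Cij B m i j \<inter> Cij B m i j') = (N - 3) choose (m - 2)"
        using card_CC[OF fin(1) i(1) jj(1) i(1) jj(2), of m] i ne m cB
        by (simp add: card_insert_if numeral_eq_Suc)
      have c2: "card (Cij B' m a (\<sigma> j) \<inter> Cij B' m a' (\<sigma> j)) = K"
        unfolding K_def using card_CC[OF fin(2) a(1) sj a'(1) sj, of m] a a' \<open>a \<noteq> a'\<close> m cB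
        by (simp add: card_insert_if numeral_eq_Suc)
      show False using c1 c2 cardimg[of i j i j'] a a' K1 by simp
    qed
  qed
  have imB: "\<sigma> ` B = B'"
  proof (rule card_subset_eq[OF fin(2)])
    show "\<sigma> ` B \<subseteq> B'" using sig by blast
    show "card (\<sigma> ` B) = card B'" using injs cB by (simp add: card_image)
  qed
  have "\<phi> X = \<sigma> ` X" if X: "X \<in> Sk B m" for X
  proof -
    have XB: "X \<subseteq> B" "card X = m" using X unfolding Sk_def by auto
    have "\<phi> X \<in> Sk B' m" using X bij unfolding bij_betw_def by auto
    then have f1: "finite (\<phi> X)" "card (\<phi> X) = m" using fin finite_subset unfolding Sk_def by auto
    have "\<sigma> ` X \<subseteq> \<phi> X" using step3 X by blast
    moreover have "card (\<sigma> ` X) = m" using XB injs by (metis card_image inj_on_subset)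
    ultimately show ?thesis using f1 by (metis card_subset_eq)
  qed
  then show ?thesis using injs imB unfolding bij_betw_def by blast
qed

lemma comb_one:
  assumes bij: "bij_betw \<phi> (Sk B 1) (Sk B' 1)"
  shows "\<exists>\<sigma>. bij_betw \<sigma> B B' \<and> (\<forall>X\<in>Sk B 1. \<phi> X = \<sigma> ` X)"
proof -
  define \<sigma> where "\<sigma> x = the_elem (\<phi> {x})" for x
  have S1: "Sk A 1 = (\<lambda>x. {x}) ` A" for A :: "'c set"
    unfolding Sk_def by (auto simp: card_Suc_eq)
  have ph: "\<phi> {x} = {\<sigma> x}" if "x \<in> B" for x
  proof -
    have "{x} \<in> Sk B 1" using S1 that by auto
    then have "\<phi> {x} \<in> Sk B' 1" using bij unfolding bij_betw_def by auto
    then have "\<phi> {x} \<in> (\<lambda>x. {x}) ` B'" using S1 by metis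
    then obtain y where "\<phi> {x} = {y}" by blast
    then show ?thesis unfolding \<sigma>_def by simp
  qed
  have "bij_betw \<sigma> B B'"
  proof -
    have bij1: "bij_betw \<phi> ((\<lambda>x. {x}) ` B) ((\<lambda>x. {x}) ` B')" using bij unfolding S1 .
    have inj1: "inj_on \<phi> ((\<lambda>x. {x}) ` B)" and im1: "\<phi> ` ((\<lambda>x. {x}) ` B) = (\<lambda>x. {x}) ` B'"
      using bij1 unfolding bij_betw_def by auto
    have "inj_on \<sigma> B"
    proof
      fix x y assume "x \<in> B" "y \<in> B" "\<sigma> x = \<sigma> y"
      then have "\<phi> {x} = \<phi> {y}" using ph by simp
      then show "x = y" using inj1 \<open>x \<in> B\<close> \<open>y \<in> B\<close> by (auto dest: inj_onD)
    qed
    moreover have "\<sigma> ` B = B'"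
    proof -
      have "(\<lambda>x. {\<sigma> x}) ` B = (\<lambda>x. {x}) ` B'" using im1 ph by (auto simp: image_image)
      then have eq: "\<And>y. {y} \<in> (\<lambda>x. {\<sigma> x}) ` B \<longleftrightarrow> {y} \<in> (\<lambda>x. {x}) ` B'" by simp
      show ?thesis
      proof
        show "\<sigma> ` B \<subseteq> B'"
        proof
          fix y assume "y \<in> \<sigma> ` B"
          then have "{y} \<in> (\<lambda>x. {\<sigma> x}) ` B" by auto
          then show "y \<in> B'" using eq by auto
        qed
        show "B' \<subseteq> \<sigma> ` B"
        proof
          fix y assume "y \<in> B'"
          then have "{y} \<in> (\<lambda>x. {\<sigma> x}) ` B" using eq by auto
          then show "y \<in> \<sigma> ` B" by auto
        qed
      qed
    qed
    ultimately show ?thesis unfolding bij_betw_def by blast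
  qed
  moreover have "\<forall>X\<in>Sk B 1. \<phi> X = \<sigma> ` X" unfolding S1 using ph by auto
  ultimately show ?thesis by blast
qed


locale geo =
  fixes P :: "'a set" and L :: "'a set set" and n :: nat
  assumes ls: "linear_space P L" and dimP: "has_dim P L P n"
    and exch: "exchange_axiom P L" and P2: "axiom_P2 L"
begin

lemma ls_uniq: "\<forall>p\<in>P. \<forall>q\<in>P. p \<noteq> q \<longrightarrow> (\<exists>!l. l \<in> L \<and> p \<in> l \<and> q \<in> l)"
  using ls unfolding linear_space_def by (rule conjunct2[OF conjunct2])

lemma ls_uniq': "p \<in> P \<Longrightarrow> q \<in> P \<Longrightarrow> p \<noteq> q \<Longrightarrow> \<exists>!l. l \<in> L \<and> p \<in> l \<and> q \<in> l"
  using ls_uniq by blast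

lemma lt_props:
  assumes "p \<in> P" "q \<in> P" "p \<noteq> q"
  shows "line_through L p q \<in> L \<and> p \<in> line_through L p q \<and> q \<in> line_through L p q"
proof -
  have "\<exists>!l. l \<in> L \<and> p \<in> l \<and> q \<in> l" using assms by (rule ls_uniq')
  then show ?thesis unfolding line_through_def by (rule theI')
qed

lemma line_sub: "l \<in> L \<Longrightarrow> l \<subseteq> P"
  using ls unfolding linear_space_def by (meson psubset_imp_subset)

lemma lt_unique:
  assumes "l \<in> L" "p \<in> l" "q \<in> l" "p \<noteq> q"
  shows "line_through L p q = l"
proof -
  have "p \<in> P" "q \<in> P" using assms line_sub by auto
  then have u: "\<exists>!l. l \<in> L \<and> p \<in> l \<and> q \<in> l" using assms(4) by (intro ls_uniq')
  show ?thesis unfolding line_through_def by (rule the1_equality[OF u]) (use assms in auto)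
qed

lemma subspace_P: "subspace P L P"
  unfolding subspace_def
proof (intro conjI ballI impI)
  fix p q assume "p \<in> P" "q \<in> P" "p \<noteq> q"
  then have "line_through L p q \<in> L" using lt_props by simp
  then show "line_through L p q \<subseteq> P" by (rule line_sub)
qed simp

lemma subspace_Inter:
  assumes "\<forall>S\<in>SS. subspace P L S" "SS \<noteq> {}"
  shows "subspace P L (\<Inter>SS)"
  using assms unfolding subspace_def by blast

lemma span_inc: "X \<subseteq> span P L X"
  unfolding span_def by blast

lemma span_least: "subspace P L S \<Longrightarrow> X \<subseteq> S \<Longrightarrow> span P L X \<subseteq> S"
  unfolding span_def by blast

lemma span_mono: "X \<subseteq> Y \<Longrightarrow> span P L X \<subseteq> span P L Y"
  unfolding span_def by blast

lemma span_subspace: "X \<subseteq> P \<Longrightarrow> subspace P L (span P L X)"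
  unfolding span_def using subspace_P by (intro subspace_Inter) auto

lemma span_sub_P: "X \<subseteq> P \<Longrightarrow> span P L X \<subseteq> P"
  using span_least subspace_P by blast

lemma span_of_subspace: "subspace P L S \<Longrightarrow> span P L S = S"
  using span_least span_inc by blast

lemma span_idem: "X \<subseteq> P \<Longrightarrow> span P L (span P L X) = span P L X"
  using span_of_subspace span_subspace by blast

lemma span_sub_span: "X \<subseteq> span P L Y \<Longrightarrow> Y \<subseteq> P \<Longrightarrow> span P L X \<subseteq> span P L Y"
  using span_least span_subspace by blast

lemma span_empty: "span P L {} = {}"
proof -
  have "subspace P L {}" unfolding subspace_def by auto
  then show ?thesis using span_of_subspace by blast
qed

lemma span_single: "p \<in> P \<Longrightarrow> span P L {p} = {p}"
proof -
  assume "p \<in> P"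
  then have "subspace P L {p}" unfolding subspace_def by auto
  then show ?thesis using span_of_subspace by blast
qed

lemma exch':
  assumes "X \<subseteq> P" "p1 \<in> P" "p2 \<in> P" "p1 \<notin> span P L X" "p2 \<notin> span P L X"
    "p2 \<in> span P L (insert p1 X)"
  shows "p1 \<in> span P L (insert p2 X)"
proof -
  have h: "\<forall>X p1 p2. X \<subseteq> P \<and> p1 \<in> P - span P L X \<and> p2 \<in> P - span P L X \<and>
        p2 \<in> span P L (X \<union> {p1}) \<longrightarrow> p1 \<in> span P L (X \<union> {p2})"
    using exch unfolding exchange_axiom_def .
  have "X \<subseteq> P \<and> p1 \<in> P - span P L X \<and> p2 \<in> P - span P L X \<and> p2 \<in> span P L (X \<union> {p1})"
    using assms by simp
  then have "p1 \<in> span P L (X \<union> {p2})" using h by blast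
  then show ?thesis by simp
qed

lemma indep_iff: "independent P L I \<longleftrightarrow> I \<subseteq> P \<and> (\<forall>x\<in>I. x \<notin> span P L (I - {x}))"
proof
  assume a: "independent P L I"
  have IP: "I \<subseteq> P" and nsp: "\<And>Y. Y \<subset> I \<Longrightarrow> span P L Y \<noteq> span P L I"
    using a unfolding independent_def by auto
  have "x \<notin> span P L (I - {x})" if "x \<in> I" for x
  proof
    assume x: "x \<in> span P L (I - {x})"
    have "I \<subseteq> span P L (I - {x})" using x span_inc[of "I - {x}"] by auto
    moreover have "I - {x} \<subseteq> P" using IP by auto
    ultimately have "span P L I \<subseteq> span P L (I - {x})" by (rule span_sub_span)
    moreover have "span P L (I - {x}) \<subseteq> span P L I" by (rule span_mono) auto
    ultimately have "span P L (I - {x}) = span P L I" by (rule antisym[rotated])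
    moreover have "I - {x} \<subset> I" using that by auto
    ultimately show False using nsp by auto
  qed
  then show "I \<subseteq> P \<and> (\<forall>x\<in>I. x \<notin> span P L (I - {x}))" using IP by auto
next
  assume a: "I \<subseteq> P \<and> (\<forall>x\<in>I. x \<notin> span P L (I - {x}))"
  have "span P L Y \<noteq> span P L I" if Y: "Y \<subset> I" for Y
  proof
    assume eq: "span P L Y = span P L I"
    obtain x where x: "x \<in> I" "x \<notin> Y" using psubset_imp_ex_mem[OF Y] by auto
    have "x \<in> span P L Y" using eq x span_inc[of I] by auto
    moreover have "span P L Y \<subseteq> span P L (I - {x})" using Y x by (intro span_mono) auto
    ultimately show False using a x by auto
  qed
  then show "independent P L I" using a unfolding independent_def by auto
qed

lemma indep_sub_P: "independent P L I \<Longrightarrow> I \<subseteq> P"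
  unfolding independent_def by blast

lemma indep_subset: "independent P L I \<Longrightarrow> J \<subseteq> I \<Longrightarrow> independent P L J"
  unfolding indep_iff by (meson Diff_mono order_refl span_mono subset_iff)

lemma indep_notin:
  assumes "independent P L I" "x \<in> I" "X \<subseteq> I" "x \<notin> X"
  shows "x \<notin> span P L X"
proof -
  have "span P L X \<subseteq> span P L (I - {x})" using assms by (intro span_mono) blast
  then show ?thesis using assms indep_iff by blast
qed

lemma span_Int_indep:
  assumes "independent P L I" "X \<subseteq> I"
  shows "span P L X \<inter> I = X"
  using indep_notin[OF assms(1) _ assms(2)] span_inc assms(2) by blast

lemma indep_insert:
  assumes I: "independent P L I" and y: "y \<in> P" "y \<notin> span P L I"
  shows "independent P L (insert y I)"
  unfolding indep_iff
proof (intro conjI ballI)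
  show "insert y I \<subseteq> P" using I y indep_sub_P by blast
  fix x assume x: "x \<in> insert y I"
  show "x \<notin> span P L (insert y I - {x})"
  proof (cases "x = y")
    case True
    have "insert y I - {x} \<subseteq> I" using True by blast
    then show ?thesis using y True span_mono by blast
  next
    case False
    then have xI: "x \<in> I" using x by blast
    have IP: "I - {x} \<subseteq> P" using I indep_sub_P by blast
    have nx: "x \<notin> span P L (I - {x})" using I xI indep_iff by blast
    have ny: "y \<notin> span P L (I - {x})" using y span_mono[of "I - {x}" I] by blast
    have eq: "insert y I - {x} = insert y (I - {x})" using False by blast
    show ?thesis
    proof
      assume "x \<in> span P L (insert y I - {x})"
      then have "x \<in> span P L (insert y (I - {x}))" using eq by simp
      then have "y \<in> span P L (insert x (I - {x}))"
        using exch'[OF IP y(1) _ ny nx] IP xI indep_sub_P[OF I] by blast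
      moreover have "insert x (I - {x}) = I" using xI by blast
      ultimately show False using y by simp
    qed
  qed
qed

end


context geo begin

lemma has_dimD1:
  assumes "has_dim P L S m"
  obtains X where "finite X" "X \<subseteq> P" "card X = m + 1" "span P L X = S"
proof -
  have "\<exists>X. finite X \<and> X \<subseteq> P \<and> card X = m + 1 \<and> span P L X = S"
    using assms unfolding has_dim_def by (rule conjunct1[OF conjunct2])
  then show ?thesis using that by blast
qed

lemma has_dimD2:
  assumes "has_dim P L S m" "finite X" "X \<subseteq> P" "span P L X = S"
  shows "m + 1 \<le> card X"
proof -
  have h: "\<forall>X. finite X \<and> X \<subseteq> P \<and> span P L X = S \<longrightarrow> m + 1 \<le> card X"
    using assms(1) unfolding has_dim_def by (rule conjunct2[OF conjunct2])
  show ?thesis using h[rule_format, of X] assms(2-4) by simp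
qed

lemma steinitz_fin:
  assumes "finite Y" "Y \<subseteq> P"
  shows "finite X \<Longrightarrow> independent P L X \<Longrightarrow> X \<subseteq> span P L Y \<Longrightarrow> card (X - Y) = d \<Longrightarrow> card X \<le> card Y"
proof (induction d arbitrary: X)
  case 0
  then have "X \<subseteq> Y" using assms by auto
  then show ?case using assms card_mono by blast
next
  case (Suc d)
  have "X - Y \<noteq> {}" using Suc.prems(4) by (metis card.empty nat.distinct(1))
  then obtain x where x: "x \<in> X" "x \<notin> Y" by blast
  have XP: "X - {x} \<subseteq> P" using Suc.prems(2) indep_sub_P by blast
  have "\<not> Y \<subseteq> span P L (X - {x})"
  proof
    assume "Y \<subseteq> span P L (X - {x})"
    then have "span P L Y \<subseteq> span P L (X - {x})" using XP by (rule span_sub_span)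
    then have "x \<in> span P L (X - {x})" using Suc.prems(3) x by auto
    then show False using Suc.prems(2) x indep_iff by auto
  qed
  then obtain y where y: "y \<in> Y" "y \<notin> span P L (X - {x})" by auto
  have yP: "y \<in> P" using y assms by auto
  define X' where "X' = insert y (X - {x})"
  have ind: "independent P L X'" unfolding X'_def
    by (rule indep_insert[OF indep_subset[OF Suc.prems(2)] yP y(2)]) auto
  have yX: "y \<notin> X - {x}" using y span_inc[of "X - {x}"] by auto
  have yx: "y \<noteq> x" using x y by auto
  have fX': "finite X'" unfolding X'_def using Suc.prems(1) by auto
  have "card (X - {x}) = card X - 1" using x Suc.prems(1) by simp
  moreover have "card X > 0" using x Suc.prems(1) card_gt_0_iff by blast
  ultimately have cX': "card X' = card X" unfolding X'_def using Suc.prems(1) x yX by (simp add: card_insert_if)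
  have sX': "X' \<subseteq> span P L Y" unfolding X'_def using Suc.prems(3) y span_inc[of Y] by auto
  have "X' - Y = (X - Y) - {x}" unfolding X'_def using y by auto
  then have "card (X' - Y) = d" using Suc.prems(4) x Suc.prems(1) by simp
  then have "card X' \<le> card Y" using Suc.IH fX' ind sX' by blast
  then show ?case using cX' by simp
qed

lemma steinitz:
  assumes "independent P L X" "finite Y" "Y \<subseteq> P" "X \<subseteq> span P L Y"
  shows "finite X \<and> card X \<le> card Y"
proof -
  have fin: "finite X"
  proof (rule ccontr)
    assume "infinite X"
    then obtain X0 where X0: "X0 \<subseteq> X" "finite X0" "card X0 = Suc (card Y)"
      using infinite_arbitrarily_large by blast
    have "card X0 \<le> card Y"
      using steinitz_fin[OF assms(2,3) X0(2) indep_subset[OF assms(1) X0(1)]] X0(1) assms(4) by blast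
    then show False using X0 by simp
  qed
  then show ?thesis using steinitz_fin[OF assms(2,3) fin assms(1,4)] by blast
qed

lemma dim_indep:
  assumes "independent P L X" "finite X" "X \<noteq> {}"
  shows "has_dim P L (span P L X) (card X - 1)"
proof -
  have XP: "X \<subseteq> P" using assms indep_sub_P by blast
  have c: "card X - 1 + 1 = card X" using assms by (simp add: card_gt_0_iff)
  show ?thesis unfolding has_dim_def
  proof (intro conjI allI impI)
    show "subspace P L (span P L X)" using XP by (rule span_subspace)
    show "\<exists>Xa. finite Xa \<and> Xa \<subseteq> P \<and> card Xa = card X - 1 + 1 \<and> span P L Xa = span P L X"
      using assms(2) XP c by (intro exI[of _ X]) simp
    fix Z assume Z: "finite Z \<and> Z \<subseteq> P \<and> span P L Z = span P L X"
    then have "X \<subseteq> span P L Z" using span_inc[of X] by auto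
    then have "card X \<le> card Z" using steinitz[OF assms(1)] Z by blast
    then show "card X - 1 + 1 \<le> card Z" using c by simp
  qed
qed

lemma has_dim_unique:
  assumes a: "has_dim P L S a" and b: "has_dim P L S b" shows "a = b"
proof -
  obtain Xa where Xa: "finite Xa" "Xa \<subseteq> P" "card Xa = a + 1" "span P L Xa = S"
    using a by (rule has_dimD1)
  obtain Xb where Xb: "finite Xb" "Xb \<subseteq> P" "card Xb = b + 1" "span P L Xb = S"
    using b by (rule has_dimD1)
  have "a + 1 \<le> card Xb" using a Xb(1,2,4) by (rule has_dimD2)
  moreover have "b + 1 \<le> card Xa" using b Xa(1,2,4) by (rule has_dimD2)
  ultimately show ?thesis using Xa Xb by simp
qed

lemma P_span: obtains Y where "finite Y" "Y \<subseteq> P" "card Y = n + 1" "span P L Y = P"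
  using dimP by (rule has_dimD1)

lemma P_ne: "P \<noteq> {}"
proof -
  obtain Y where Y: "finite Y" "Y \<subseteq> P" "card Y = n + 1" "span P L Y = P" by (rule P_span)
  then have "Y \<noteq> {}" by auto
  then show ?thesis using Y by auto
qed

lemma base_indep: "base P L B \<Longrightarrow> independent P L B"
  unfolding base_def base_of_def by blast

lemma base_span: "base P L B \<Longrightarrow> span P L B = P"
  unfolding base_def base_of_def by blast

lemma base_card:
  assumes "base P L B"
  shows "finite B \<and> card B = n + 1"
proof -
  obtain Y where Y: "finite Y" "Y \<subseteq> P" "card Y = n + 1" "span P L Y = P" by (rule P_span)
  have BP: "B \<subseteq> P" using assms base_indep indep_sub_P by blast
  have fB: "finite B" using steinitz[OF base_indep[OF assms] Y(1,2)] Y(4) BP by blast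
  have "B \<noteq> {}" using assms base_span span_empty P_ne by force
  then have "has_dim P L P (card B - 1)" using dim_indep[OF base_indep[OF assms] fB] base_span[OF assms] by simp
  then have "card B - 1 = n" using dimP has_dim_unique by blast
  moreover have "card B > 0" using fB \<open>B \<noteq> {}\<close> card_gt_0_iff by blast
  ultimately show ?thesis using fB by simp
qed

lemma extend_aux:
  "independent P L I \<Longrightarrow> finite I \<Longrightarrow> n + 1 - card I = d \<Longrightarrow> \<exists>B. base P L B \<and> I \<subseteq> B"
proof (induction d arbitrary: I rule: less_induct)
  case (less d)
  show ?case
  proof (cases "span P L I = P")
    case True
    then have "base P L I" unfolding base_def base_of_def using less.prems(1) by simp
    then show ?thesis by auto
  next
    case False
    have IP: "I \<subseteq> P" using less.prems indep_sub_P by blast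
    then have "span P L I \<subseteq> P" by (rule span_sub_P)
    then obtain y where y: "y \<in> P" "y \<notin> span P L I" using False by blast
    have ind: "independent P L (insert y I)" by (rule indep_insert[OF less.prems(1) y])
    have yI: "y \<notin> I" using y span_inc[of I] by auto
    obtain Y where Y: "finite Y" "Y \<subseteq> P" "card Y = n + 1" "span P L Y = P" by (rule P_span)
    have "insert y I \<subseteq> span P L Y" using Y(4) indep_sub_P[OF ind] by simp
    then have "card (insert y I) \<le> n + 1" using steinitz[OF ind Y(1,2)] Y(3) by simp
    then have lt: "n + 1 - card (insert y I) < d" using less.prems yI by (simp add: card_insert_if)
    have "finite (insert y I)" using less.prems(2) by simp
    then obtain B where "base P L B" "insert y I \<subseteq> B"
      using less.IH[OF lt ind] by auto
    then show ?thesis by auto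
  qed
qed

lemma extend: "independent P L I \<Longrightarrow> finite I \<Longrightarrow> \<exists>B. base P L B \<and> I \<subseteq> B"
  using extend_aux by blast

lemma grass_char: "S \<in> Grass P L k \<longleftrightarrow> (\<exists>X. independent P L X \<and> finite X \<and> card X = k + 1 \<and> span P L X = S)"
proof
  assume "S \<in> Grass P L k"
  then have hd: "has_dim P L S k" unfolding Grass_def by simp
  then obtain X where X: "finite X" "X \<subseteq> P" "card X = k + 1" "span P L X = S"
    by (rule has_dimD1)
  have min: "\<And>Z. finite Z \<Longrightarrow> Z \<subseteq> P \<Longrightarrow> span P L Z = S \<Longrightarrow> k + 1 \<le> card Z"
    using hd by (rule has_dimD2)
  have "independent P L X" unfolding independent_def
  proof (intro conjI allI impI)
    show "X \<subseteq> P" by fact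
    fix Y assume Y: "Y \<subset> X"
    show "span P L Y \<noteq> span P L X"
    proof
      assume "span P L Y = span P L X"
      moreover have "finite Y" "Y \<subseteq> P" using Y X by (auto intro: finite_subset)
      ultimately have "k + 1 \<le> card Y" using min X(4) by blast
      moreover have "card Y < card X" using Y X(1) by (rule psubset_card_mono[rotated])
      ultimately show False using X(3) by simp
    qed
  qed
  then show "\<exists>X. independent P L X \<and> finite X \<and> card X = k + 1 \<and> span P L X = S" using X by blast
next
  assume "\<exists>X. independent P L X \<and> finite X \<and> card X = k + 1 \<and> span P L X = S"
  then obtain X where X: "independent P L X" "finite X" "card X = k + 1" "span P L X = S" by blast
  then have "X \<noteq> {}" by auto
  then have "has_dim P L S (card X - 1)" using dim_indep X by blast
  then show "S \<in> Grass P L k" unfolding Grass_def using X by simp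
qed

lemma base_subset_eq:
  assumes B: "base P L B"
  shows "base_subset P L k B = span P L ` Sk B (k + 1)"
proof
  have fB: "finite B" using base_card[OF B] by blast
  show "base_subset P L k B \<subseteq> span P L ` Sk B (k + 1)"
  proof
    fix S assume "S \<in> base_subset P L k B"
    then obtain X where S: "S \<in> Grass P L k" "X \<subseteq> B" "span P L X = S" unfolding base_subset_def by blast
    have indX: "independent P L X" using indep_subset[OF base_indep[OF B] S(2)] .
    have fX: "finite X" using fB S(2) by (rule finite_subset[rotated])
    obtain Z where Z: "independent P L Z" "finite Z" "card Z = k + 1" "span P L Z = S"
      using S(1) grass_char by blast
    have "Z \<noteq> {}" using Z by auto
    then have "S \<noteq> {}" using Z span_inc[of Z] by auto
    then have "X \<noteq> {}" using S(3) span_empty by auto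
    then have "has_dim P L S (card X - 1)" using dim_indep[OF indX fX] S(3) by simp
    moreover have "has_dim P L S k" using S(1) unfolding Grass_def by simp
    ultimately have "card X - 1 = k" by (rule has_dim_unique)
    moreover have "card X > 0" using fX \<open>X \<noteq> {}\<close> card_gt_0_iff by blast
    ultimately have "card X = k + 1" by simp
    then show "S \<in> span P L ` Sk B (k + 1)" using S unfolding Sk_def by blast
  qed
  show "span P L ` Sk B (k + 1) \<subseteq> base_subset P L k B"
  proof
    fix S assume "S \<in> span P L ` Sk B (k + 1)"
    then obtain X where X: "X \<subseteq> B" "card X = k + 1" "S = span P L X" unfolding Sk_def by blast
    have indX: "independent P L X" using indep_subset[OF base_indep[OF B] X(1)] .
    have fX: "finite X" using fB X(1) by (rule finite_subset[rotated])
    have "S \<in> Grass P L k" using grass_char indX fX X by blast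
    then show "S \<in> base_subset P L k B" unfolding base_subset_def using X by blast
  qed
qed

end


context geo begin

lemma int2_aux:
  assumes I: "independent P L I" and Y2: "Y2 \<subseteq> I" and W: "W \<subseteq> Y2"
  shows "finite A \<Longrightarrow> A \<subseteq> I - Y2 \<Longrightarrow> span P L (W \<union> A) \<inter> span P L Y2 \<subseteq> span P L W"
proof (induction A rule: finite_induct)
  case empty show ?case by simp
next
  case (insert a A)
  have IP: "I \<subseteq> P" using I by (rule indep_sub_P)
  have AI: "A \<subseteq> I - Y2" using insert.prems by simp
  have aI: "a \<in> I" "a \<notin> Y2" using insert.prems by auto
  show ?case
  proof
    fix q assume q: "q \<in> span P L (W \<union> insert a A) \<inter> span P L Y2"
    show "q \<in> span P L W"
    proof (cases "q \<in> span P L (W \<union> A)")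
      case True
      then show ?thesis using insert.IH[OF AI] q by blast
    next
      case False
      have WA: "W \<union> A \<subseteq> P" using W Y2 AI IP by blast
      have aP: "a \<in> P" using aI IP by blast
      have Y2P: "Y2 \<subseteq> P" using Y2 IP by blast
      have qP: "q \<in> P" using q span_sub_P[OF Y2P] by blast
      have aWA: "a \<notin> W \<union> A" using aI W insert.hyps(2) by blast
      have na: "a \<notin> span P L (W \<union> A)"
        by (rule indep_notin[OF I aI(1) _ aWA]) (use W Y2 AI in blast)
      have "W \<union> insert a A = insert a (W \<union> A)" by blast
      then have "q \<in> span P L (insert a (W \<union> A))" using q by simp
      then have a1: "a \<in> span P L (insert q (W \<union> A))" by (rule exch'[OF WA aP qP na False])
      have Y2A: "Y2 \<union> A \<subseteq> P" using Y2P AI IP by blast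
      have "insert q (W \<union> A) \<subseteq> span P L (Y2 \<union> A)"
      proof -
        have "q \<in> span P L (Y2 \<union> A)" using q span_mono[of Y2 "Y2 \<union> A"] by blast
        moreover have "W \<union> A \<subseteq> span P L (Y2 \<union> A)" using W span_inc[of "Y2 \<union> A"] by blast
        ultimately show ?thesis by blast
      qed
      then have "span P L (insert q (W \<union> A)) \<subseteq> span P L (Y2 \<union> A)" using Y2A by (rule span_sub_span)
      then have "a \<in> span P L (Y2 \<union> A)" using a1 by blast
      moreover have "a \<notin> span P L (Y2 \<union> A)"
        by (rule indep_notin[OF I aI(1)]) (use Y2 AI aI insert.hyps(2) in blast)+
      ultimately show ?thesis by blast
    qed
  qed
qed

lemma int2:
  assumes I: "independent P L I" and "Y1 \<subseteq> I" "Y2 \<subseteq> I" "finite Y1"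
  shows "span P L Y1 \<inter> span P L Y2 \<subseteq> span P L (Y1 \<inter> Y2)"
proof -
  have "Y1 = (Y1 \<inter> Y2) \<union> (Y1 - Y2)" by blast
  moreover have "span P L ((Y1 \<inter> Y2) \<union> (Y1 - Y2)) \<inter> span P L Y2 \<subseteq> span P L (Y1 \<inter> Y2)"
    by (rule int2_aux[OF I assms(3)]) (use assms in auto)
  ultimately show ?thesis by simp
qed

lemma intN:
  assumes I: "independent P L I" and ne: "YY \<noteq> {}" and sub: "\<And>Y. Y \<in> YY \<Longrightarrow> Y \<subseteq> I \<and> finite Y"
    and q: "\<And>Y. Y \<in> YY \<Longrightarrow> q \<in> span P L Y"
  shows "q \<in> span P L (\<Inter>YY)"
proof -
  obtain Y0 where Y0: "Y0 \<in> YY" using ne by blast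
  have "Y0 \<subseteq> Y0 \<and> q \<in> span P L Y0" using q Y0 by blast
  then obtain Z where Z: "Z \<subseteq> Y0 \<and> q \<in> span P L Z"
    and min: "\<forall>Z'. Z' \<subseteq> Y0 \<and> q \<in> span P L Z' \<longrightarrow> card Z \<le> card Z'"
    using ex_has_least_nat[of "\<lambda>Z. Z \<subseteq> Y0 \<and> q \<in> span P L Z" Y0 card] by blast
  have fY0: "finite Y0" "Y0 \<subseteq> I" using sub Y0 by auto
  have fZ: "finite Z" using Z fY0 finite_subset by blast
  have "Z \<subseteq> Y" if Y: "Y \<in> YY" for Y
  proof -
    have "q \<in> span P L Z \<inter> span P L Y" using Z q Y by blast
    also have "\<dots> \<subseteq> span P L (Z \<inter> Y)" by (rule int2[OF I]) (use Z fY0 sub Y fZ in auto)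
    finally have "q \<in> span P L (Z \<inter> Y)" .
    moreover have "Z \<inter> Y \<subseteq> Y0" using Z by blast
    ultimately have "card Z \<le> card (Z \<inter> Y)" using min by blast
    then have "Z \<inter> Y = Z" using fZ by (intro card_seteq) auto
    then show ?thesis by blast
  qed
  then have "Z \<subseteq> \<Inter>YY" by blast
  then show ?thesis using Z span_mono by blast
qed

lemma not_bad_sub:
  assumes B: "base P L B" and B2: "base P L B2" and F: "F \<subseteq> Sk B (k + 1)" and nb: "\<not> bad B F"
    and c2: "2 \<le> card B" and sub: "span P L ` F \<subseteq> base_subset P L k B2"
  shows "B \<subseteq> B2"
proof
  fix p assume p: "p \<in> B"
  have fB: "finite B" using base_card[OF B] by blast
  have fB2: "finite B2" using base_card[OF B2] by blast
  have IB: "independent P L B" using B by (rule base_indep)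
  have IB2: "independent P L B2" using B2 by (rule base_indep)
  have pP: "p \<in> P" using p indep_sub_P[OF IB] by blast
  define YY where "YY = {X \<in> F. p \<in> X}"
  have sep: "\<exists>X\<in>YY. j \<notin> X" if j: "j \<in> B" "j \<noteq> p" for j
  proof -
    have "\<not> (\<forall>X\<in>F. p \<in> X \<longrightarrow> j \<in> X)" using nb j p unfolding bad_def by blast
    then show ?thesis unfolding YY_def by blast
  qed
  have "B - {p} \<noteq> {}"
  proof
    assume "B - {p} = {}"
    then have "B \<subseteq> {p}" by blast
    then have "card B \<le> 1" using card_mono[of "{p}" B] by simp
    then show False using c2 by simp
  qed
  then obtain j0 where j0: "j0 \<in> B" "j0 \<noteq> p" by blast
  have YYne: "YY \<noteq> {}" using sep[OF j0] by blast
  have Ysub: "X \<subseteq> B \<and> finite X" if "X \<in> YY" for X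
    using that F fB finite_subset unfolding YY_def Sk_def by blast
  have interYY: "\<Inter>YY = {p}"
  proof
    show "{p} \<subseteq> \<Inter>YY" unfolding YY_def by blast
    show "\<Inter>YY \<subseteq> {p}"
    proof
      fix x assume x: "x \<in> \<Inter>YY"
      obtain X where "X \<in> YY" using YYne by blast
      then have xB: "x \<in> B" using x Ysub by blast
      show "x \<in> {p}"
      proof (rule ccontr)
        assume "x \<notin> {p}"
        then obtain X where "X \<in> YY" "x \<notin> X" using sep[OF xB] by blast
        then show False using x by blast
      qed
    qed
  qed
  define g where "g X = span P L X \<inter> B2" for X
  have spZ: "span P L (g X) = span P L X \<and> g X \<subseteq> B2 \<and> finite (g X)" if X: "X \<in> YY" for X
  proof -
    have "span P L X \<in> base_subset P L k B2" using sub X unfolding YY_def by blast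
    then obtain Z where Z: "Z \<in> Sk B2 (k + 1)" "span P L Z = span P L X"
      using base_subset_eq[OF B2] by auto
    have "span P L Z \<inter> B2 = Z" using span_Int_indep[OF IB2] Z(1) unfolding Sk_def by blast
    then have "g X = Z" unfolding g_def using Z(2) by simp
    then show ?thesis using Z fB2 finite_subset unfolding Sk_def g_def by auto
  qed
  define ZZ where "ZZ = g ` YY"
  have ZZne: "ZZ \<noteq> {}" unfolding ZZ_def using YYne by blast
  have pW: "p \<in> span P L (\<Inter>ZZ)"
  proof (rule intN[OF IB2 ZZne])
    fix Z assume "Z \<in> ZZ"
    then obtain X where X: "X \<in> YY" "Z = g X" unfolding ZZ_def by blast
    show "Z \<subseteq> B2 \<and> finite Z" using spZ[OF X(1)] X(2) by blast
    have "p \<in> span P L X" using X(1) span_inc[of X] unfolding YY_def by blast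
    then show "p \<in> span P L Z" using spZ[OF X(1)] X(2) by simp
  qed
  have WP: "span P L (\<Inter>ZZ) \<subseteq> {p}"
  proof
    fix q assume q: "q \<in> span P L (\<Inter>ZZ)"
    have "q \<in> span P L X" if X: "X \<in> YY" for X
    proof -
      have "\<Inter>ZZ \<subseteq> g X" unfolding ZZ_def using X by blast
      then have "span P L (\<Inter>ZZ) \<subseteq> span P L (g X)" by (rule span_mono)
      then show ?thesis using q spZ[OF X] by blast
    qed
    then have "q \<in> span P L (\<Inter>YY)" by (intro intN[OF IB YYne]) (use Ysub in auto)
    then show "q \<in> {p}" using interYY span_single[OF pP] by simp
  qed
  have "\<Inter>ZZ \<noteq> {}" using pW span_empty by auto
  moreover have "\<Inter>ZZ \<subseteq> {p}" using WP span_inc[of "\<Inter>ZZ"] by blast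
  ultimately have "p \<in> \<Inter>ZZ" by blast
  moreover obtain X where "X \<in> YY" using YYne by blast
  ultimately show "p \<in> B2" using spZ unfolding ZZ_def by blast
qed

lemma base_sub_eq:
  assumes B: "base P L B" and B2: "base P L B2" and sub: "B \<subseteq> B2"
  shows "B = B2"
proof (rule ccontr)
  assume "B \<noteq> B2"
  then obtain x where x: "x \<in> B2" "x \<notin> B" using sub by blast
  have "x \<in> P" using x indep_sub_P[OF base_indep[OF B2]] by blast
  then have "x \<in> span P L B" using base_span[OF B] by simp
  moreover have "span P L B \<subseteq> span P L (B2 - {x})" using sub x by (intro span_mono) blast
  ultimately show False using x base_indep[OF B2] indep_iff by blast
qed

lemma base_subset_inj:
  assumes B1: "base P L B1" and B2: "base P L B2" and eq: "base_subset P L k B1 = base_subset P L k B2"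
    and c: "k + 2 \<le> card B1"
  shows "B1 = B2"
proof -
  have fB1: "finite B1" using base_card[OF B1] by blast
  have nb: "\<not> bad B1 (Sk B1 (k + 1))"
  proof
    assume "bad B1 (Sk B1 (k + 1))"
    then obtain i j where ij: "i \<in> B1" "j \<in> B1" "i \<noteq> j" "\<forall>X\<in>Sk B1 (k + 1). j \<in> X \<longrightarrow> i \<in> X"
      unfolding bad_def by blast
    obtain X where X: "X \<in> Sk B1 (k + 1)" "{j} \<subseteq> X" "X \<inter> {i} = {}"
      by (rule exists_Sk[of B1 "{j}" "{i}" "k + 1"]) (use fB1 ij c in auto)
    then show False using ij by blast
  qed
  have sub: "span P L ` Sk B1 (k + 1) \<subseteq> base_subset P L k B2" using eq base_subset_eq[OF B1] by simp
  have c2: "2 \<le> card B1" using c by simp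
  have "B1 \<subseteq> B2" by (rule not_bad_sub[OF B1 B2 subset_refl nb c2 sub])
  then show ?thesis using base_sub_eq[OF B1 B2] by blast
qed

end


context geo begin

lemma span_pair_line:
  assumes "p \<in> P" "q \<in> P" "p \<noteq> q"
  shows "span P L {p, q} = line_through L p q"
proof
  let ?l = "line_through L p q"
  have l: "?l \<in> L" "p \<in> ?l" "q \<in> ?l" using lt_props[OF assms] by auto
  have "subspace P L ?l" unfolding subspace_def
  proof (intro conjI ballI impI)
    show "?l \<subseteq> P" using l(1) by (rule line_sub)
    fix a b assume "a \<in> ?l" "b \<in> ?l" "a \<noteq> b"
    then have "line_through L a b = ?l" using lt_unique[OF l(1)] by blast
    then show "line_through L a b \<subseteq> ?l" by simp
  qed
  then show "span P L {p, q} \<subseteq> ?l" using l by (intro span_least) auto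
  have sp: "subspace P L (span P L {p, q})" using assms by (intro span_subspace) auto
  have "p \<in> span P L {p, q}" "q \<in> span P L {p, q}" using span_inc[of "{p,q}"] by auto
  then show "?l \<subseteq> span P L {p, q}" using sp assms(3) unfolding subspace_def by blast
qed

lemma line_is_span:
  assumes "l \<in> L"
  obtains p q where "p \<in> l" "q \<in> l" "p \<noteq> q" "l = span P L {p, q}"
proof -
  obtain p q where pq: "p \<in> l" "q \<in> l" "p \<noteq> q" using ls assms unfolding linear_space_def by meson
  have "p \<in> P" "q \<in> P" using pq line_sub[OF assms] by auto
  then have eq: "span P L {p, q} = l" using span_pair_line lt_unique[OF assms pq] pq(3) by simp
  show ?thesis by (rule that[OF pq]) (simp add: eq)
qed

lemma third_point:
  assumes "i \<in> P" "j \<in> P" "i \<noteq> j"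
  obtains q where "q \<in> span P L {i, j}" "q \<noteq> i" "q \<noteq> j" "q \<in> P"
proof -
  let ?l = "line_through L i j"
  have l: "?l \<in> L" using lt_props[OF assms] by auto
  have "\<forall>l\<in>L. \<exists>a b c. a \<in> l \<and> b \<in> l \<and> c \<in> l \<and> a \<noteq> b \<and> a \<noteq> c \<and> b \<noteq> c"
    using P2 unfolding axiom_P2_def .
  then obtain a b c where abc: "a \<in> ?l" "b \<in> ?l" "c \<in> ?l" "a \<noteq> b" "a \<noteq> c" "b \<noteq> c"
    using l by blast
  have "\<exists>q\<in>?l. q \<noteq> i \<and> q \<noteq> j"
  proof (cases "a \<noteq> i \<and> a \<noteq> j")
    case True then show ?thesis using abc by blast
  next
    case False
    show ?thesis
    proof (cases "b \<noteq> i \<and> b \<noteq> j")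
      case True then show ?thesis using abc by blast
    next
      case False2: False
      have "c \<noteq> i \<and> c \<noteq> j" using False False2 abc by blast
      then show ?thesis using abc by blast
    qed
  qed
  then obtain q where q: "q \<in> ?l" "q \<noteq> i" "q \<noteq> j" by blast
  have "q \<in> span P L {i, j}" using q span_pair_line[OF assms] by simp
  moreover have "q \<in> P" using q line_sub[OF l] by blast
  ultimately show ?thesis using that q by blast
qed

lemma indep_single: "p \<in> P \<Longrightarrow> independent P L {p}"
  using indep_insert[of "{}" p] span_empty by (simp add: indep_iff)

lemma indep_pair: "p \<in> P \<Longrightarrow> q \<in> P \<Longrightarrow> p \<noteq> q \<Longrightarrow> independent P L {p, q}"
  using indep_insert[OF indep_single[of q], of p] span_single[of q] by simp

lemma indep_triple:
  assumes "p \<in> P" "q \<in> P" "r \<in> P" "p \<noteq> q" "r \<noteq> p" "r \<noteq> q"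
  shows "independent P L {r, p, q} \<longleftrightarrow> r \<notin> span P L {p, q}"
proof
  assume "independent P L {r, p, q}"
  then show "r \<notin> span P L {p, q}" by (rule indep_notin) (use assms in auto)
next
  assume "r \<notin> span P L {p, q}"
  then show "independent P L {r, p, q}" using indep_insert[OF indep_pair[OF assms(1,2,4)] assms(3)] by simp
qed

lemma bad_inexact:
  assumes B: "base P L B" and F: "F \<subseteq> Sk B (k + 1)" and bd: "bad B F"
  shows "\<exists>B2. base P L B2 \<and> B2 \<noteq> B \<and> span P L ` F \<subseteq> base_subset P L k B2"
proof -
  obtain i j where ij: "i \<in> B" "j \<in> B" "i \<noteq> j" and ijF: "\<forall>X\<in>F. j \<in> X \<longrightarrow> i \<in> X"
    using bd unfolding bad_def by blast
  have IB: "independent P L B" using B by (rule base_indep)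
  have BP: "B \<subseteq> P" using IB by (rule indep_sub_P)
  have iP: "i \<in> P" and jP: "j \<in> P" using ij BP by auto
  obtain q where q: "q \<in> span P L {i, j}" "q \<noteq> i" "q \<noteq> j" "q \<in> P"
    using third_point[OF iP jP ij(3)] by blast
  have si: "span P L {i} = {i}" using span_single[OF iP] .
  have i1: "{i} \<subseteq> P" using iP by simp
  have j1: "j \<notin> span P L {i}" using si ij(3) by simp
  have q1: "q \<notin> span P L {i}" using si q(2) by simp
  have q2: "q \<in> span P L (insert j {i})" using q(1) by (simp add: insert_commute)
  have "j \<in> span P L (insert q {i})" by (rule exch'[OF i1 jP q(4) j1 q1 q2])
  then have jiq: "j \<in> span P L {i, q}" by (simp add: insert_commute)
  have BjP: "B - {j} \<subseteq> P" using BP by blast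
  have qnot: "q \<notin> span P L (B - {j})"
  proof
    assume qs: "q \<in> span P L (B - {j})"
    have "{i, q} \<subseteq> span P L (B - {j})" using qs ij span_inc[of "B - {j}"] by blast
    then have "span P L {i, q} \<subseteq> span P L (B - {j})" using BjP by (rule span_sub_span)
    then have "j \<in> span P L (B - {j})" using jiq by blast
    moreover have "j \<notin> span P L (B - {j})" using IB ij(2) unfolding indep_iff by blast
    ultimately show False by blast
  qed
  define B2 where "B2 = insert q (B - {j})"
  have IB2: "independent P L B2" unfolding B2_def
    by (rule indep_insert[OF indep_subset[OF IB] q(4) qnot]) blast
  have B2P: "B2 \<subseteq> P" using IB2 by (rule indep_sub_P)
  have "B \<subseteq> span P L B2"
  proof
    fix x assume x: "x \<in> B"
    show "x \<in> span P L B2"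
    proof (cases "x = j")
      case True
      have "{i, q} \<subseteq> B2" unfolding B2_def using ij by blast
      then have "span P L {i, q} \<subseteq> span P L B2" by (rule span_mono)
      then show ?thesis using jiq True by blast
    next
      case False
      then show ?thesis using x span_inc[of B2] unfolding B2_def by blast
    qed
  qed
  then have "span P L B \<subseteq> span P L B2" using B2P by (rule span_sub_span)
  then have "span P L B2 = P" using base_span[OF B] span_sub_P[OF B2P] by blast
  then have baseB2: "base P L B2" unfolding base_def base_of_def using IB2 by simp
  have ne: "B2 \<noteq> B"
  proof
    assume "B2 = B"
    then have "q \<in> B - {j}" unfolding B2_def using q by blast
    then show False using qnot span_inc[of "B - {j}"] by blast
  qed
  have "span P L X \<in> base_subset P L k B2" if X: "X \<in> F" for X
  proof -
    have XS: "X \<in> Sk B (k + 1)" using X F by blast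
    then have "span P L X \<in> base_subset P L k B" using base_subset_eq[OF B] by blast
    then have G: "span P L X \<in> Grass P L k" unfolding base_subset_def by blast
    have XB: "X \<subseteq> B" using XS unfolding Sk_def by blast
    have XP: "X \<subseteq> P" using XB BP by blast
    have "\<exists>Z. Z \<subseteq> B2 \<and> span P L Z = span P L X"
    proof (cases "j \<in> X")
      case False
      then have "X \<subseteq> B2" using XB unfolding B2_def by blast
      then show ?thesis by blast
    next
      case True
      then have iX: "i \<in> X" using ijF X by blast
      define Z where "Z = insert q (X - {j})"
      have ZB2: "Z \<subseteq> B2" unfolding Z_def B2_def using XB by blast
      have ZP: "Z \<subseteq> P" using ZB2 B2P by blast
      have "{i, j} \<subseteq> X" using iX True by blast
      then have "span P L {i, j} \<subseteq> span P L X" by (rule span_mono)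
      then have "Z \<subseteq> span P L X" unfolding Z_def using q span_inc[of X] by blast
      then have s1: "span P L Z \<subseteq> span P L X" using XP by (rule span_sub_span)
      have "{i, q} \<subseteq> Z" unfolding Z_def using iX ij by blast
      then have "span P L {i, q} \<subseteq> span P L Z" by (rule span_mono)
      then have "X \<subseteq> span P L Z" unfolding Z_def using jiq span_inc[of "insert q (X - {j})"] by blast
      then have s2: "span P L X \<subseteq> span P L Z" using ZP by (rule span_sub_span)
      show ?thesis using ZB2 s1 s2 by blast
    qed
    then show ?thesis using G unfolding base_subset_def by blast
  qed
  then show ?thesis using baseB2 ne by blast
qed

lemma basis_exchange:
  assumes B1: "base P L B1" and B2: "base P L B2" and x: "x \<in> B1" "x \<notin> B2"
  shows "\<exists>y\<in>B2 - B1. base P L (insert y (B1 - {x}))"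
proof -
  have I1: "independent P L B1" using B1 by (rule base_indep)
  have B1P: "B1 \<subseteq> P" using I1 by (rule indep_sub_P)
  have B1xP: "B1 - {x} \<subseteq> P" using B1P by blast
  have nx: "x \<notin> span P L (B1 - {x})" using I1 x indep_iff by blast
  have "\<not> B2 \<subseteq> span P L (B1 - {x})"
  proof
    assume "B2 \<subseteq> span P L (B1 - {x})"
    then have "span P L B2 \<subseteq> span P L (B1 - {x})" using B1xP by (rule span_sub_span)
    then show False using base_span[OF B2] x(1) B1P nx by blast
  qed
  then obtain y where y: "y \<in> B2" "y \<notin> span P L (B1 - {x})" by blast
  have yP: "y \<in> P" using y indep_sub_P[OF base_indep[OF B2]] by blast
  have yB1: "y \<notin> B1" using y x span_inc[of "B1 - {x}"] by blast
  define B3 where "B3 = insert y (B1 - {x})"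
  have I3: "independent P L B3" unfolding B3_def
    by (rule indep_insert[OF indep_subset[OF I1] yP y(2)]) blast
  have B3P: "B3 \<subseteq> P" using I3 by (rule indep_sub_P)
  have "y \<in> span P L (insert x (B1 - {x}))" using yP base_span[OF B1] x(1) by (simp add: insert_absorb)
  moreover have xP: "x \<in> P" using x B1P by blast
  ultimately have "x \<in> span P L (insert y (B1 - {x}))" using exch'[OF B1xP xP yP nx y(2)] by blast
  then have "B1 \<subseteq> span P L B3" unfolding B3_def using span_inc[of "insert y (B1 - {x})"] by blast
  then have "span P L B1 \<subseteq> span P L B3" using B3P by (rule span_sub_span)
  then have "span P L B3 = P" using base_span[OF B1] span_sub_P[OF B3P] by blast
  then have "base P L B3" unfolding base_def base_of_def using I3 by simp
  then show ?thesis using y yB1 unfolding B3_def by blast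
qed

end


lemma (in geo) not_bad_Sk:
  assumes "finite B" "k + 2 \<le> card B"
  shows "\<not> bad B (Sk B (k + 1))"
proof
  assume "bad B (Sk B (k + 1))"
  then obtain i j where ij: "i \<in> B" "j \<in> B" "i \<noteq> j" "\<forall>X\<in>Sk B (k + 1). j \<in> X \<longrightarrow> i \<in> X"
    unfolding bad_def by blast
  obtain X where X: "X \<in> Sk B (k + 1)" "{j} \<subseteq> X" "X \<inter> {i} = {}"
    by (rule exists_Sk[of B "{j}" "{i}" "k + 1"]) (use assms ij in auto)
  then show False using ij by blast
qed

locale pair = A: geo P L n + B: geo P' L' n
  for P :: "'a set" and L and P' :: "'b set" and L' and n

locale two = pair +
  fixes k :: nat and f :: "'a set \<Rightarrow> 'b set"
  assumes nk: "n > 2 * k + 1"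
    and fbij: "bij_betw f (Grass P L k) (Grass P' L' k)"
    and fwd: "\<And>A. is_base_subset P L k A \<Longrightarrow> is_base_subset P' L' k (f ` A)"
    and bwd: "\<And>A'. is_base_subset P' L' k A' \<Longrightarrow> is_base_subset P L k (inv_into (Grass P L k) f ` A')"
begin

lemma finj: "inj_on f (Grass P L k)" using fbij unfolding bij_betw_def by blast
lemma fim: "f ` Grass P L k = Grass P' L' k" using fbij unfolding bij_betw_def by blast

lemma bs_Grass: "base_subset P L k B \<subseteq> Grass P L k"
  unfolding base_subset_def by blast
lemma bs_Grass': "base_subset P' L' k B \<subseteq> Grass P' L' k"
  unfolding base_subset_def by blast

lemma fwd_base:
  assumes "base P L B"
  obtains B' where "base P' L' B'" "f ` base_subset P L k B = base_subset P' L' k B'"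
proof -
  have "is_base_subset P L k (base_subset P L k B)" unfolding is_base_subset_def using assms by blast
  then have "is_base_subset P' L' k (f ` base_subset P L k B)" by (rule fwd)
  then show ?thesis using that unfolding is_base_subset_def by blast
qed

lemma bwd_base:
  assumes "base P' L' B'"
  obtains B where "base P L B" "inv_into (Grass P L k) f ` base_subset P' L' k B' = base_subset P L k B"
proof -
  have "is_base_subset P' L' k (base_subset P' L' k B')" unfolding is_base_subset_def using assms by blast
  then have "is_base_subset P L k (inv_into (Grass P L k) f ` base_subset P' L' k B')" by (rule bwd)
  then show ?thesis using that unfolding is_base_subset_def by blast
qed

lemma local_sigma:
  assumes B: "base P L B"
  shows "\<exists>\<sigma> B'. base P' L' B' \<and> bij_betw \<sigma> B B' \<and>
           (\<forall>X\<in>Sk B (k + 1). f (span P L X) = span P' L' (\<sigma> ` X))"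
proof -
  define m where "m = k + 1"
  obtain B' where B': "base P' L' B'" and fB: "f ` base_subset P L k B = base_subset P' L' k B'"
    using fwd_base[OF B] by blast
  have cB: "finite B" "card B = n + 1" using A.base_card[OF B] by auto
  have cB': "finite B'" "card B' = n + 1" using B.base_card[OF B'] by auto
  have IB: "independent P L B" using B by (rule A.base_indep)
  have IB': "independent P' L' B'" using B' by (rule B.base_indep)
  define \<phi> where "\<phi> X = f (span P L X) \<inter> B'" for X
  have bsB: "base_subset P L k B = span P L ` Sk B m" unfolding m_def by (rule A.base_subset_eq[OF B])
  have bsB': "base_subset P' L' k B' = span P' L' ` Sk B' m" unfolding m_def by (rule B.base_subset_eq[OF B'])
  have c1: "\<phi> X \<in> Sk B' m \<and> f (span P L X) = span P' L' (\<phi> X)" if X: "X \<in> Sk B m" for X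
  proof -
    have "span P L X \<in> base_subset P L k B" using X bsB by simp
    then have "f (span P L X) \<in> f ` base_subset P L k B" by (rule imageI)
    then have "f (span P L X) \<in> span P' L' ` Sk B' m" using fB bsB' by simp
    then obtain Y where Y: "Y \<in> Sk B' m" "f (span P L X) = span P' L' Y" by auto
    have "Y \<subseteq> B'" using Y(1) unfolding Sk_def by blast
    then have "span P' L' Y \<inter> B' = Y" by (rule B.span_Int_indep[OF IB'])
    then have "\<phi> X = Y" unfolding \<phi>_def using Y(2) by simp
    then show ?thesis using Y by simp
  qed
  have spG: "span P L X \<in> Grass P L k" if "X \<in> Sk B m" for X
  proof -
    have "span P L X \<in> base_subset P L k B" using that bsB by simp
    then show ?thesis using bs_Grass by (rule subsetD[rotated])
  qed
  have phibij: "bij_betw \<phi> (Sk B m) (Sk B' m)"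
    unfolding bij_betw_def
  proof (intro conjI)
    show "inj_on \<phi> (Sk B m)"
    proof
      fix X Y assume XY: "X \<in> Sk B m" "Y \<in> Sk B m" "\<phi> X = \<phi> Y"
      then have "f (span P L X) = f (span P L Y)" using c1[OF XY(1)] c1[OF XY(2)] by simp
      then have eq: "span P L X = span P L Y" using inj_onD[OF finj _ spG[OF XY(1)] spG[OF XY(2)]] by simp
      have XB: "X \<subseteq> B" and YB: "Y \<subseteq> B" using XY(1,2) unfolding Sk_def by auto
      have "X = span P L X \<inter> B" using A.span_Int_indep[OF IB XB] by simp
      also have "\<dots> = span P L Y \<inter> B" using eq by simp
      also have "\<dots> = Y" using A.span_Int_indep[OF IB YB] .
      finally show "X = Y" .
    qed
    show "\<phi> ` Sk B m = Sk B' m"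
    proof
      show "\<phi> ` Sk B m \<subseteq> Sk B' m"
      proof (rule image_subsetI)
        fix X assume "X \<in> Sk B m" then show "\<phi> X \<in> Sk B' m" using c1 by blast
      qed
      show "Sk B' m \<subseteq> \<phi> ` Sk B m"
      proof
        fix Y assume Y: "Y \<in> Sk B' m"
        then have "span P' L' Y \<in> base_subset P' L' k B'" using bsB' by simp
        then have "span P' L' Y \<in> f ` (span P L ` Sk B m)" using fB bsB by simp
        then obtain X where X: "X \<in> Sk B m" "span P' L' Y = f (span P L X)" by auto
        have "Y \<subseteq> B'" using Y unfolding Sk_def by blast
        then have "span P' L' Y \<inter> B' = Y" by (rule B.span_Int_indep[OF IB'])
        then have "\<phi> X = Y" unfolding \<phi>_def using X(2) by simp
        then show "Y \<in> \<phi> ` Sk B m" using X(1) by blast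
      qed
    qed
  qed
  have imgF: "span P' L' ` (\<phi> ` F) = f ` (span P L ` F)" if F: "F \<subseteq> Sk B m" for F
  proof -
    have "span P' L' ` (\<phi> ` F) = (\<lambda>X. span P' L' (\<phi> X)) ` F" by (simp add: image_image)
    also have "\<dots> = (\<lambda>X. f (span P L X)) ` F" using c1 F by (intro image_cong) auto
    also have "\<dots> = f ` (span P L ` F)" by (simp add: image_image)
    finally show ?thesis .
  qed
  have cn: "k + 2 \<le> n + 1" using nk by simp
  have main: "\<exists>\<sigma>. bij_betw \<sigma> B B' \<and> (\<forall>X\<in>Sk B m. \<phi> X = \<sigma> ` X)"
  proof (cases "k = 0")
    case True
    then have "m = 1" unfolding m_def by simp
    then show ?thesis using comb_one[of \<phi> B B'] phibij by simp
  next
    case False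
    have m2: "2 \<le> m" using False unfolding m_def by simp
    have mN: "2 * m < n + 1" using nk unfolding m_def by simp
    have bd: "\<forall>F \<subseteq> Sk B m. bad B F \<longleftrightarrow> bad B' (\<phi> ` F)"
    proof (intro allI impI)
      fix F assume F: "F \<subseteq> Sk B m"
      have phiF: "\<phi> ` F \<subseteq> Sk B' m" using F c1 by blast
      show "bad B F \<longleftrightarrow> bad B' (\<phi> ` F)"
      proof
        assume bF: "bad B F"
        have F': "F \<subseteq> Sk B (k + 1)" using F unfolding m_def .
        obtain B2 where B2: "base P L B2" "B2 \<noteq> B" "span P L ` F \<subseteq> base_subset P L k B2"
          using A.bad_inexact[OF B F' bF] by blast
        obtain B2' where B2': "base P' L' B2'" "f ` base_subset P L k B2 = base_subset P' L' k B2'"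
          using fwd_base[OF B2(1)] by blast
        have "f ` (span P L ` F) \<subseteq> f ` base_subset P L k B2" using B2(3) by (rule image_mono)
        then have "span P' L' ` (\<phi> ` F) \<subseteq> base_subset P' L' k B2'"
          using imgF[OF F] B2'(2) by simp
        show "bad B' (\<phi> ` F)"
        proof (rule ccontr)
          assume nb: "\<not> bad B' (\<phi> ` F)"
          have c2: "2 \<le> card B'" using cB' nk by simp
          have phiF': "\<phi> ` F \<subseteq> Sk B' (k + 1)" using phiF unfolding m_def .
          have "B' \<subseteq> B2'"
            by (rule B.not_bad_sub[OF B' B2'(1) phiF' nb c2]) fact
          then have "B' = B2'" using B.base_sub_eq[OF B' B2'(1)] by blast
          then have "f ` base_subset P L k B2 = f ` base_subset P L k B" using fB B2'(2) by simp
          then have "base_subset P L k B2 = base_subset P L k B"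
            using finj bs_Grass by (simp add: inj_on_image_eq_iff)
          moreover have "k + 2 \<le> card B2" using A.base_card[OF B2(1)] cn by simp
          ultimately have "B2 = B" using A.base_subset_inj[OF B2(1) B] by blast
          then show False using B2(2) by simp
        qed
      next
        assume bF: "bad B' (\<phi> ` F)"
        have phiF': "\<phi> ` F \<subseteq> Sk B' (k + 1)" using phiF unfolding m_def .
        obtain B2' where B2': "base P' L' B2'" "B2' \<noteq> B'" "span P' L' ` (\<phi> ` F) \<subseteq> base_subset P' L' k B2'"
          using B.bad_inexact[OF B' phiF' bF] by blast
        obtain B2 where B2: "base P L B2" "inv_into (Grass P L k) f ` base_subset P' L' k B2' = base_subset P L k B2"
          using bwd_base[OF B2'(1)] by blast
        have spF: "span P L ` F \<subseteq> Grass P L k" using F spG by blast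
        have "inv_into (Grass P L k) f ` (f ` (span P L ` F)) = span P L ` F"
          using finj spF by (simp add: inv_into_image_cancel)
        moreover have "inv_into (Grass P L k) f ` (f ` (span P L ` F)) \<subseteq> base_subset P L k B2"
          using B2'(3) imgF[OF F] B2(2) image_mono[of "span P' L' ` (\<phi> ` F)" "base_subset P' L' k B2'" "inv_into (Grass P L k) f"] by simp
        ultimately have sub2: "span P L ` F \<subseteq> base_subset P L k B2" by simp
        show "bad B F"
        proof (rule ccontr)
          assume nb: "\<not> bad B F"
          have c2: "2 \<le> card B" using cB nk by simp
          have F': "F \<subseteq> Sk B (k + 1)" using F unfolding m_def .
          have "B \<subseteq> B2" by (rule A.not_bad_sub[OF B B2(1) F' nb c2 sub2])
          then have "B = B2" using A.base_sub_eq[OF B B2(1)] by blast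
          have "base_subset P' L' k B2' = f ` (inv_into (Grass P L k) f ` base_subset P' L' k B2')"
            using fim bs_Grass' by (simp add: image_inv_into_cancel)
          also have "\<dots> = f ` base_subset P L k B" using B2(2) \<open>B = B2\<close> by simp
          also have "\<dots> = base_subset P' L' k B'" by (rule fB)
          finally have "base_subset P' L' k B2' = base_subset P' L' k B'" .
          moreover have "k + 2 \<le> card B2'" using B.base_card[OF B2'(1)] cn by simp
          ultimately have "B2' = B'" using B.base_subset_inj[OF B2'(1) B'] by blast
          then show False using B2'(2) by simp
        qed
      qed
    qed
    show ?thesis by (rule comb_main[OF cB(1) cB'(1) cB(2) cB'(2) m2 mN phibij bd])
  qed
  then obtain \<sigma> where \<sigma>: "bij_betw \<sigma> B B'" "\<forall>X\<in>Sk B m. \<phi> X = \<sigma> ` X" by blast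
  have "\<forall>X\<in>Sk B (k + 1). f (span P L X) = span P' L' (\<sigma> ` X)"
    using c1 \<sigma>(2) unfolding m_def by simp
  then show ?thesis using B' \<sigma>(1) by blast
qed

end


context two begin

lemma construct:
  "\<exists>g. (\<forall>p\<in>P. g p \<in> P') \<and>
       (\<forall>B. base P L B \<longrightarrow> base P' L' (g ` B) \<and> inj_on g B \<and>
            (\<forall>X\<in>Sk B (k + 1). f (span P L X) = span P' L' (g ` X)))"
proof -
  define m where "m = k + 1"
  have ex: "\<forall>B. \<exists>\<sigma>. base P L B \<longrightarrow> (\<exists>B'. base P' L' B' \<and> bij_betw \<sigma> B B' \<and>
           (\<forall>X\<in>Sk B (k + 1). f (span P L X) = span P' L' (\<sigma> ` X)))"
  proof
    fix B
    show "\<exists>\<sigma>. base P L B \<longrightarrow> (\<exists>B'. base P' L' B' \<and> bij_betw \<sigma> B B' \<and>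
           (\<forall>X\<in>Sk B (k + 1). f (span P L X) = span P' L' (\<sigma> ` X)))"
    proof (cases "base P L B")
      case True
      then obtain \<sigma> B' where "base P' L' B' \<and> bij_betw \<sigma> B B' \<and>
           (\<forall>X\<in>Sk B (k + 1). f (span P L X) = span P' L' (\<sigma> ` X))" using local_sigma by blast
      then show ?thesis by blast
    qed simp
  qed
  obtain \<Sigma> where \<Sigma>0: "\<forall>B. base P L B \<longrightarrow> (\<exists>B'. base P' L' B' \<and> bij_betw (\<Sigma> B) B B' \<and>
           (\<forall>X\<in>Sk B (k + 1). f (span P L X) = span P' L' (\<Sigma> B ` X)))"
    using choice[OF ex] by blast
  have \<Sigma>: "\<exists>B'. base P' L' B' \<and> bij_betw (\<Sigma> B) B B' \<and>
           (\<forall>X\<in>Sk B m. f (span P L X) = span P' L' (\<Sigma> B ` X))" if "base P L B" for B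
    using \<Sigma>0 that unfolding m_def by blast
  have cons1: "\<Sigma> B1 p = \<Sigma> B2 p"
    if B1: "base P L B1" and B2: "base P L B2" and p: "p \<in> B1" "p \<in> B2"
      and c: "m + 1 \<le> card (B1 \<inter> B2)" for B1 B2 p
  proof -
    obtain B1' where b1: "base P' L' B1'" "bij_betw (\<Sigma> B1) B1 B1'"
        "\<forall>X\<in>Sk B1 m. f (span P L X) = span P' L' (\<Sigma> B1 ` X)" using \<Sigma>[OF B1] by blast
    obtain B2' where b2: "base P' L' B2'" "bij_betw (\<Sigma> B2) B2 B2'"
        "\<forall>X\<in>Sk B2 m. f (span P L X) = span P' L' (\<Sigma> B2 ` X)" using \<Sigma>[OF B2] by blast
    define C where "C = B1 \<inter> B2"
    have fC: "finite C" unfolding C_def using A.base_card[OF B1] by blast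
    have pC: "p \<in> C" unfolding C_def using p by blast
    define YY where "YY = {X. X \<in> Sk C m \<and> p \<in> X}"
    have YS: "X \<in> Sk B1 m \<and> X \<in> Sk B2 m" if "X \<in> YY" for X
      using that unfolding YY_def Sk_def C_def by blast
    obtain X0 where X0: "X0 \<in> Sk C m" "{p} \<subseteq> X0" "X0 \<inter> {} = {}"
      by (rule exists_Sk[of C "{p}" "{}" m]) (use fC pC c in \<open>auto simp: m_def C_def\<close>)
    have YYne: "YY \<noteq> {}" using X0 unfolding YY_def by blast
    have interYY: "\<Inter>YY = {p}"
    proof
      show "{p} \<subseteq> \<Inter>YY" unfolding YY_def by blast
      show "\<Inter>YY \<subseteq> {p}"
      proof
        fix c assume cY: "c \<in> \<Inter>YY"
        have cC: "c \<in> C" using cY X0 unfolding YY_def Sk_def by blast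
        show "c \<in> {p}"
        proof (rule ccontr)
          assume "c \<notin> {p}"
          then obtain X where X: "X \<in> Sk C m" "{p} \<subseteq> X" "X \<inter> {c} = {}"
            by (rule_tac exists_Sk[of C "{p}" "{c}" m]) (use fC pC cC c in \<open>auto simp: m_def C_def\<close>)
          then have "X \<in> YY" unfolding YY_def by blast
          then show False using cY X by blast
        qed
      qed
    qed
    have inj1: "inj_on (\<Sigma> B1) B1" using b1(2) unfolding bij_betw_def by blast
    have img1: "\<Sigma> B1 ` B1 = B1'" using b1(2) unfolding bij_betw_def by blast
    have img2: "\<Sigma> B2 ` B2 = B2'" using b2(2) unfolding bij_betw_def by blast
    define ZZ where "ZZ = (\<lambda>X. \<Sigma> B1 ` X) ` YY"
    have "\<Sigma> B1 ` (\<Inter>((\<lambda>X. X) ` YY)) = (\<Inter>X\<in>YY. \<Sigma> B1 ` X)"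
    proof (rule image_INT[OF inj1])
      show "\<forall>X\<in>YY. X \<subseteq> B1" using YS unfolding Sk_def by blast
      show "X0 \<in> YY" using X0 unfolding YY_def by blast
    qed
    then have interZZ: "\<Inter>ZZ = {\<Sigma> B1 p}" unfolding ZZ_def using interYY by simp
    have IB1': "independent P' L' B1'" using b1(1) by (rule B.base_indep)
    have fB1: "finite B1" using A.base_card[OF B1] by blast
    have "\<Sigma> B2 p \<in> span P' L' (\<Inter>ZZ)"
    proof (rule B.intN[OF IB1'])
      show "ZZ \<noteq> {}" unfolding ZZ_def using YYne by blast
      fix Z assume "Z \<in> ZZ"
      then obtain X where X: "X \<in> YY" "Z = \<Sigma> B1 ` X" unfolding ZZ_def by blast
      have XB1: "X \<subseteq> B1" using YS[OF X(1)] unfolding Sk_def by blast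
      have XB2: "X \<subseteq> B2" using YS[OF X(1)] unfolding Sk_def by blast
      show "Z \<subseteq> B1' \<and> finite Z" using X(2) XB1 img1 fB1 finite_subset by blast
      have "span P' L' (\<Sigma> B1 ` X) = f (span P L X)" using b1(3) YS[OF X(1)] by simp
      also have "\<dots> = span P' L' (\<Sigma> B2 ` X)" using b2(3) YS[OF X(1)] by simp
      finally have "span P' L' (\<Sigma> B1 ` X) = span P' L' (\<Sigma> B2 ` X)" .
      moreover have "\<Sigma> B2 p \<in> \<Sigma> B2 ` X" using X(1) unfolding YY_def by blast
      ultimately show "\<Sigma> B2 p \<in> span P' L' Z" using X(2) B.span_inc[of "\<Sigma> B2 ` X"] by blast
    qed
    moreover have "\<Sigma> B1 p \<in> P'" using img1 p B.indep_sub_P[OF IB1'] by blast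
    ultimately show ?thesis using interZZ B.span_single by simp
  qed
  have cons_aux: "\<forall>B1. base P L B1 \<and> p \<in> B1 \<and> card (B1 - B2) = d \<longrightarrow> \<Sigma> B1 p = \<Sigma> B2 p"
    if B2: "base P L B2" and p: "p \<in> B2" for B2 p d
  proof (induction d)
    case 0
    show ?case
    proof (intro allI impI)
      fix B1 assume h: "base P L B1 \<and> p \<in> B1 \<and> card (B1 - B2) = 0"
      have "finite B1" using A.base_card h by blast
      then have "B1 \<subseteq> B2" using h by auto
      then have "B1 = B2" using A.base_sub_eq h B2 by blast
      then show "\<Sigma> B1 p = \<Sigma> B2 p" by simp
    qed
  next
    case (Suc d)
    show ?case
    proof (intro allI impI)
      fix B1 assume h: "base P L B1 \<and> p \<in> B1 \<and> card (B1 - B2) = Suc d"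
      have B1: "base P L B1" using h by blast
      have fB1: "finite B1" "card B1 = n + 1" using A.base_card[OF B1] by auto
      have "B1 - B2 \<noteq> {}" using h by (metis card.empty nat.distinct(1))
      then obtain x where x: "x \<in> B1" "x \<notin> B2" by blast
      obtain y where y: "y \<in> B2 - B1" and B3: "base P L (insert y (B1 - {x}))"
        using A.basis_exchange[OF B1 B2 x] by blast
      define B3 where "B3 = insert y (B1 - {x})"
      have pB3: "p \<in> B3" unfolding B3_def using h p x by auto
      have "B1 \<inter> B3 = B1 - {x}" unfolding B3_def using y by auto
      then have "card (B1 \<inter> B3) = n" using fB1 x by simp
      moreover have "m + 1 \<le> n" using nk unfolding m_def by simp
      ultimately have e1: "\<Sigma> B1 p = \<Sigma> B3 p" using cons1[OF B1 B3[folded B3_def] _ pB3] h by simp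
      have "B3 - B2 = (B1 - B2) - {x}" unfolding B3_def using y by auto
      then have "card (B3 - B2) = d" using h x fB1 by simp
      then have "\<Sigma> B3 p = \<Sigma> B2 p" using Suc.IH B3[folded B3_def] pB3 by blast
      then show "\<Sigma> B1 p = \<Sigma> B2 p" using e1 by simp
    qed
  qed
  have cons: "\<Sigma> B1 p = \<Sigma> B2 p" if "base P L B1" "base P L B2" "p \<in> B1" "p \<in> B2" for B1 B2 p
    using cons_aux[OF that(2,4)] that(1,3) by blast
  define g where "g p = \<Sigma> (SOME B. base P L B \<and> p \<in> B) p" for p
  have gB: "g p = \<Sigma> B p" if "base P L B" "p \<in> B" for B p
  proof -
    have "base P L (SOME B. base P L B \<and> p \<in> B) \<and> p \<in> (SOME B. base P L B \<and> p \<in> B)"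
      using that by (intro someI[of "\<lambda>B. base P L B \<and> p \<in> B"]) blast
    then show ?thesis unfolding g_def using cons that by blast
  qed
  have gbase: "base P' L' (g ` B) \<and> inj_on g B \<and> (\<forall>X\<in>Sk B (k + 1). f (span P L X) = span P' L' (g ` X))"
    if B: "base P L B" for B
  proof -
    obtain B' where b: "base P' L' B'" "bij_betw (\<Sigma> B) B B'"
        "\<forall>X\<in>Sk B m. f (span P L X) = span P' L' (\<Sigma> B ` X)" using \<Sigma>[OF B] by blast
    have eqB: "\<And>p. p \<in> B \<Longrightarrow> g p = \<Sigma> B p" using gB[OF B] by blast
    have "g ` B = \<Sigma> B ` B" using eqB by (rule image_cong[OF refl])
    then have "g ` B = B'" using b(2) unfolding bij_betw_def by simp
    moreover have "inj_on g B" using b(2) eqB unfolding bij_betw_def by (metis inj_on_cong)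
    moreover have "\<forall>X\<in>Sk B (k + 1). f (span P L X) = span P' L' (g ` X)"
    proof
      fix X assume X: "X \<in> Sk B (k + 1)"
      then have "X \<subseteq> B" unfolding Sk_def by blast
      then have "g ` X = \<Sigma> B ` X" using eqB by (intro image_cong) auto
      then show "f (span P L X) = span P' L' (g ` X)" using b(3) X unfolding m_def by simp
    qed
    ultimately show ?thesis using b(1) by simp
  qed
  have gP: "g p \<in> P'" if p: "p \<in> P" for p
  proof -
    obtain B where B: "base P L B" "{p} \<subseteq> B" using A.extend[OF A.indep_single[OF p]] by auto
    have "g ` B \<subseteq> P'" using gbase[OF B(1)] B.base_indep B.indep_sub_P by blast
    then show ?thesis using B(2) by blast
  qed
  show ?thesis using gP gbase by blast
qed

end


lemma inverse_lemma:
  assumes A: "geo P L n" and B: "geo P' L' n" and nk: "n > 2 * k + 1"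
    and gP: "\<forall>p\<in>P. g p \<in> P'"
    and gb: "\<forall>B. base P L B \<longrightarrow> base P' L' (g ` B) \<and> inj_on g B \<and>
              (\<forall>X\<in>Sk B (k + 1). f (span P L X) = span P' L' (g ` X))"
    and hb: "\<forall>B. base P' L' B \<longrightarrow> base P L (h ` B) \<and> inj_on h B \<and>
              (\<forall>X\<in>Sk B (k + 1). f2 (span P' L' X) = span P L (h ` X))"
    and f2f: "\<forall>S\<in>Grass P L k. f2 (f S) = S"
    and p: "p \<in> P"
  shows "h (g p) = p"
proof -
  define m where "m = k + 1"
  obtain B where B: "base P L B" "{p} \<subseteq> B"
    using geo.extend[OF A geo.indep_single[OF A p]] by auto
  have gB0: "base P' L' (g ` B) \<and> inj_on g B \<and> (\<forall>X\<in>Sk B (k + 1). f (span P L X) = span P' L' (g ` X))"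
    using gb B(1) by blast
  have gB: "base P' L' (g ` B)" "inj_on g B" "\<forall>X\<in>Sk B m. f (span P L X) = span P' L' (g ` X)"
    using gB0 unfolding m_def by blast+
  have hB0: "base P L (h ` g ` B) \<and> inj_on h (g ` B) \<and> (\<forall>X\<in>Sk (g ` B) (k + 1). f2 (span P' L' X) = span P L (h ` X))"
    using hb gB(1) by blast
  have hB: "base P L (h ` g ` B)" "inj_on h (g ` B)" "\<forall>Y\<in>Sk (g ` B) m. f2 (span P' L' Y) = span P L (h ` Y)"
    using hB0 unfolding m_def by blast+
  define B2 where "B2 = h ` g ` B"
  have cB: "finite B" "card B = n + 1" using geo.base_card[OF A B(1)] by auto
  have IB: "independent P L B" using geo.base_indep[OF A B(1)] .
  have IB2: "independent P L B2" unfolding B2_def using geo.base_indep[OF A hB(1)] .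
  have key: "h ` g ` X \<in> Sk B2 m \<and> span P L (h ` g ` X) = span P L X" if X: "X \<in> Sk B m" for X
  proof -
    have XB: "X \<subseteq> B" "card X = m" using X unfolding Sk_def by auto
    have ig: "inj_on g X" using gB(2) XB(1) by (rule inj_on_subset)
    have gXB: "g ` X \<subseteq> g ` B" using XB by blast
    have cg: "card (g ` X) = m" using card_image[OF ig] XB(2) by simp
    have gX: "g ` X \<in> Sk (g ` B) m" using gXB cg unfolding Sk_def by blast
    have ih: "inj_on h (g ` X)" using hB(2) gXB by (rule inj_on_subset)
    have "card (h ` g ` X) = m" using card_image[OF ih] cg by simp
    then have hX: "h ` g ` X \<in> Sk B2 m" unfolding Sk_def B2_def using XB by blast
    have "span P L X \<in> base_subset P L k B" using geo.base_subset_eq[OF A B(1)] X unfolding m_def by blast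
    then have G: "span P L X \<in> Grass P L k" unfolding base_subset_def by blast
    have "span P L (h ` g ` X) = f2 (span P' L' (g ` X))" using hB(3) gX by simp
    also have "\<dots> = f2 (f (span P L X))" using gB(3) X by simp
    also have "\<dots> = span P L X" using f2f G by simp
    finally show ?thesis using hX by simp
  qed
  have sub: "span P L ` Sk B (k + 1) \<subseteq> base_subset P L k B2"
  proof
    fix S assume "S \<in> span P L ` Sk B (k + 1)"
    then obtain X where X: "X \<in> Sk B m" "S = span P L X" unfolding m_def by blast
    have "S = span P L (h ` g ` X)" using key[OF X(1)] X(2) by simp
    then have "S \<in> span P L ` Sk B2 m" using key[OF X(1)] by blast
    then show "S \<in> base_subset P L k B2"
      using geo.base_subset_eq[OF A hB(1)] unfolding B2_def m_def by simp
  qed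
  have nb: "\<not> bad B (Sk B (k + 1))" using geo.not_bad_Sk[OF A cB(1)] cB nk by simp
  have c2: "2 \<le> card B" using cB nk by simp
  have "B \<subseteq> B2" using geo.not_bad_sub[OF A B(1) hB(1)[folded B2_def] subset_refl nb c2 sub] .
  then have BB2: "B = B2" using geo.base_sub_eq[OF A B(1) hB(1)[folded B2_def]] by blast
  have hgX: "h ` g ` X = X" if X: "X \<in> Sk B m" for X
  proof -
    have "h ` g ` X \<subseteq> B" using key[OF X] BB2 unfolding Sk_def by blast
    then have "h ` g ` X = span P L (h ` g ` X) \<inter> B" using geo.span_Int_indep[OF A IB] by simp
    also have "\<dots> = span P L X \<inter> B" using key[OF X] by simp
    also have "\<dots> = X" using geo.span_Int_indep[OF A IB] X unfolding Sk_def by blast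
    finally show ?thesis .
  qed
  have pB: "p \<in> B" using B(2) by blast
  show ?thesis
  proof (rule ccontr)
    assume ne: "h (g p) \<noteq> p"
    have "h (g p) \<in> B" using pB BB2 unfolding B2_def by blast
    then obtain X where X: "X \<in> Sk B m" "{p} \<subseteq> X" "X \<inter> {h (g p)} = {}"
      by (rule_tac exists_Sk[of B "{p}" "{h (g p)}" m]) (use cB pB ne nk in \<open>auto simp: m_def\<close>)
    have "h (g p) \<in> h ` g ` X" using X(2) by blast
    then show False using hgX[OF X(1)] X(3) by blast
  qed
qed

lemma pair_lines:
  assumes A: "geo P L n" and B: "geo P' L' n"
    and gP: "\<forall>p\<in>P. g p \<in> P'" and hP: "\<forall>q\<in>P'. h q \<in> P"
    and hg: "\<forall>p\<in>P. h (g p) = p" and gh: "\<forall>q\<in>P'. g (h q) = q"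
    and gi: "\<And>I. independent P L I \<Longrightarrow> finite I \<Longrightarrow> independent P' L' (g ` I)"
    and hi: "\<And>I. independent P' L' I \<Longrightarrow> finite I \<Longrightarrow> independent P L (h ` I)"
    and pq: "p \<in> P" "q \<in> P" "p \<noteq> q"
  shows "g ` span P L {p, q} = span P' L' {g p, g q}"
proof
  have gpq: "g p \<in> P'" "g q \<in> P'" "g p \<noteq> g q" using gP hg pq by metis+
  show "g ` span P L {p, q} \<subseteq> span P' L' {g p, g q}"
  proof
    fix s assume "s \<in> g ` span P L {p, q}"
    then obtain r where r: "r \<in> span P L {p, q}" "s = g r" by blast
    have rP: "r \<in> P" using r geo.span_sub_P[OF A, of "{p,q}"] pq by blast
    show "s \<in> span P' L' {g p, g q}"
    proof (cases "r = p \<or> r = q")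
      case True
      then show ?thesis using r(2) geo.span_inc[OF B, of "{g p, g q}"] by blast
    next
      case False
      show ?thesis
      proof (rule ccontr)
        assume ns: "s \<notin> span P' L' {g p, g q}"
        have sP: "s \<in> P'" using gP rP r(2) by blast
        have sne: "s \<noteq> g p" "s \<noteq> g q" using False r(2) hg rP pq by metis+
        have "independent P' L' {s, g p, g q}"
          using geo.indep_triple[OF B gpq(1,2) sP gpq(3) sne] ns by simp
        then have "independent P L (h ` {s, g p, g q})" by (rule hi) simp
        moreover have "h ` {s, g p, g q} = {r, p, q}" using hg r(2) rP pq by simp
        ultimately have "independent P L {r, p, q}" by simp
        then have "r \<notin> span P L {p, q}" using geo.indep_triple[OF A pq(1,2) rP pq(3)] False by blast
        then show False using r(1) by blast
      qed
    qed
  qed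
  show "span P' L' {g p, g q} \<subseteq> g ` span P L {p, q}"
  proof
    fix s assume s: "s \<in> span P' L' {g p, g q}"
    have sP: "s \<in> P'" using s geo.span_sub_P[OF B, of "{g p, g q}"] gpq by blast
    define r where "r = h s"
    have rP: "r \<in> P" and gr: "g r = s" unfolding r_def using hP gh sP by auto
    have "r \<in> span P L {p, q}"
    proof (cases "r = p \<or> r = q")
      case True
      then show ?thesis using geo.span_inc[OF A, of "{p, q}"] by blast
    next
      case False
      show ?thesis
      proof (rule ccontr)
        assume nr: "r \<notin> span P L {p, q}"
        have "independent P L {r, p, q}"
          using geo.indep_triple[OF A pq(1,2) rP pq(3)] False nr by blast
        then have "independent P' L' (g ` {r, p, q})" by (rule gi) simp
        then have "independent P' L' {s, g p, g q}" using gr by simp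
        moreover have "s \<noteq> g p" "s \<noteq> g q" using False gr hg rP pq by metis+
        ultimately have "s \<notin> span P' L' {g p, g q}"
          using geo.indep_triple[OF B gpq(1,2) sP gpq(3)] by blast
        then show False using s by blast
      qed
    qed
    then show "s \<in> g ` span P L {p, q}" using gr by blast
  qed
qed

lemma pair_subspace:
  assumes A: "geo P L n" and B: "geo P' L' n"
    and gP: "\<forall>p\<in>P. g p \<in> P'" and hg: "\<forall>p\<in>P. h (g p) = p"
    and lines: "\<And>p q. p \<in> P \<Longrightarrow> q \<in> P \<Longrightarrow> p \<noteq> q \<Longrightarrow> g ` span P L {p, q} = span P' L' {g p, g q}"
    and S: "subspace P L S"
  shows "subspace P' L' (g ` S)"
  unfolding subspace_def
proof (intro conjI ballI impI)
  have SP: "S \<subseteq> P" using S unfolding subspace_def by blast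
  then show "g ` S \<subseteq> P'" using gP by blast
  fix a b assume ab: "a \<in> g ` S" "b \<in> g ` S" "a \<noteq> b"
  then obtain x y where xy: "x \<in> S" "y \<in> S" "a = g x" "b = g y" by blast
  have xyP: "x \<in> P" "y \<in> P" using xy SP by auto
  have "x \<noteq> y" using ab(3) xy(3,4) by auto
  have "line_through L' a b = span P' L' {a, b}"
    using geo.span_pair_line[OF B] ab xy gP xyP by simp
  also have "\<dots> = g ` span P L {x, y}" using lines[OF xyP \<open>x \<noteq> y\<close>] xy by simp
  also have "span P L {x, y} = line_through L x y" using geo.span_pair_line[OF A xyP \<open>x \<noteq> y\<close>] .
  also have "line_through L x y \<subseteq> S" using S xy \<open>x \<noteq> y\<close> unfolding subspace_def by blast
  finally show "line_through L' a b \<subseteq> g ` S" by blast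
qed


theorem theorem2p4:
  fixes P :: "'a set" and L :: "'a set set"
    and P' :: "'b set" and L' :: "'b set set"
    and n k :: nat
    and f :: "'a set \<Rightarrow> 'b set"
  assumes "linear_space P L" and "linear_space P' L'"
    and "has_dim P L P n" and "has_dim P' L' P' n"
    and "n \<ge> 4"
    and "exchange_axiom P L" and "exchange_axiom P' L'"
    and "axiom_P2 L" and "axiom_P2 L'"
    and "n > 2 * k + 1"
    and "bij_betw f (Grass P L k) (Grass P' L' k)"
    and "\<And>A. is_base_subset P L k A \<Longrightarrow> is_base_subset P' L' k (f ` A)"
    and "\<And>A'. is_base_subset P' L' k A' \<Longrightarrow>
               is_base_subset P L k (inv_into (Grass P L k) f ` A')"
  shows "\<exists>g. collineation P L P' L' g \<and> (\<forall>S\<in>Grass P L k. f S = g ` S)"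
proof -
  have A: "geo P L n" by (rule geo.intro) (use assms in auto)
  have B: "geo P' L' n" by (rule geo.intro) (use assms in auto)
  have nk: "n > 2 * k + 1" by fact
  have fbij: "bij_betw f (Grass P L k) (Grass P' L' k)" by fact
  define \<psi> where "\<psi> = inv_into (Grass P L k) f"
  have finj: "inj_on f (Grass P L k)" and fim: "f ` Grass P L k = Grass P' L' k"
    using fbij unfolding bij_betw_def by auto
  have T1: "two P L P' L' n k f"
    by (rule two.intro[OF pair.intro[OF A B] two_axioms.intro[OF nk fbij]]) (use assms(12,13) in auto)
  have psibij: "bij_betw \<psi> (Grass P' L' k) (Grass P L k)" unfolding \<psi>_def using fbij by (rule bij_betw_inv_into)
  have bwd2: "is_base_subset P' L' k (inv_into (Grass P' L' k) \<psi> ` A)" if "is_base_subset P L k A" for A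
  proof -
    have AG: "A \<subseteq> Grass P L k" using that unfolding is_base_subset_def base_subset_def by blast
    have "inv_into (Grass P' L' k) \<psi> ` A = f ` A"
      unfolding \<psi>_def using inv_into_inv_into_eq[OF fbij] AG by (intro image_cong) auto
    then show ?thesis using assms(12)[OF that] by simp
  qed
  have T2: "two P' L' P L n k \<psi>"
    by (rule two.intro[OF pair.intro[OF B A] two_axioms.intro[OF nk psibij]])
       (use assms(13) bwd2 in \<open>auto simp: \<psi>_def\<close>)
  obtain g where g1: "\<forall>p\<in>P. g p \<in> P'" and
    g2: "\<forall>B. base P L B \<longrightarrow> base P' L' (g ` B) \<and> inj_on g B \<and>
            (\<forall>X\<in>Sk B (k + 1). f (span P L X) = span P' L' (g ` X))"
    using two.construct[OF T1] by blast
  obtain h where h1: "\<forall>p\<in>P'. h p \<in> P" and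
    h2: "\<forall>B. base P' L' B \<longrightarrow> base P L (h ` B) \<and> inj_on h B \<and>
            (\<forall>X\<in>Sk B (k + 1). \<psi> (span P' L' X) = span P L (h ` X))"
    using two.construct[OF T2] by blast
  have f2f: "\<forall>S\<in>Grass P L k. \<psi> (f S) = S" unfolding \<psi>_def using finj by simp
  have ff2: "\<forall>S\<in>Grass P' L' k. f (\<psi> S) = S" unfolding \<psi>_def using fim by (simp add: f_inv_into_f)
  have hg: "\<forall>p\<in>P. h (g p) = p" using inverse_lemma[OF A B nk g1 g2 h2 f2f] by blast
  have gh: "\<forall>q\<in>P'. g (h q) = q" using inverse_lemma[OF B A nk h1 h2 g2 ff2] by blast
  have gi: "independent P' L' (g ` I)" if I: "independent P L I" "finite I" for I
  proof -
    obtain B where B0: "base P L B" "I \<subseteq> B" using geo.extend[OF A I] by blast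
    have "base P' L' (g ` B)" using g2[rule_format, OF B0(1)] by (rule conjunct1)
    then have i1: "independent P' L' (g ` B)" by (rule geo.base_indep[OF B])
    have "g ` I \<subseteq> g ` B" using B0(2) by (rule image_mono)
    then show ?thesis by (rule geo.indep_subset[OF B i1])
  qed
  have hi: "independent P L (h ` I)" if I: "independent P' L' I" "finite I" for I
  proof -
    obtain B where B0: "base P' L' B" "I \<subseteq> B" using geo.extend[OF B I] by blast
    have "base P L (h ` B)" using h2[rule_format, OF B0(1)] by (rule conjunct1)
    then have i1: "independent P L (h ` B)" by (rule geo.base_indep[OF A])
    have "h ` I \<subseteq> h ` B" using B0(2) by (rule image_mono)
    then show ?thesis by (rule geo.indep_subset[OF A i1])
  qed
  have glines: "g ` span P L {p, q} = span P' L' {g p, g q}" if "p \<in> P" "q \<in> P" "p \<noteq> q" for p q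
    by (rule pair_lines[OF A B g1 h1 hg gh gi hi that])
  have hlines: "h ` span P' L' {p, q} = span P L {h p, h q}" if "p \<in> P'" "q \<in> P'" "p \<noteq> q" for p q
    by (rule pair_lines[OF B A h1 g1 gh hg hi gi that])
  have gsp: "g ` span P L X = span P' L' (g ` X)" if X: "X \<subseteq> P" for X
  proof
    have gXP: "g ` X \<subseteq> P'" using X g1 by blast
    have s1: "subspace P' L' (g ` span P L X)"
      by (rule pair_subspace[OF A B g1 hg glines geo.span_subspace[OF A X]])
    show "span P' L' (g ` X) \<subseteq> g ` span P L X"
      by (rule geo.span_least[OF B s1]) (use geo.span_inc[OF A, of X] in blast)
    have s2: "subspace P L (h ` span P' L' (g ` X))"
      by (rule pair_subspace[OF B A h1 gh hlines geo.span_subspace[OF B gXP]])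
    have "h ` g ` X = X" using hg X by (force simp: image_image)
    then have "X \<subseteq> h ` span P' L' (g ` X)" using geo.span_inc[OF B, of "g ` X"] by blast
    then have "span P L X \<subseteq> h ` span P' L' (g ` X)" by (rule geo.span_least[OF A s2])
    then have "g ` span P L X \<subseteq> g ` h ` span P' L' (g ` X)" by (rule image_mono)
    also have "\<dots> = span P' L' (g ` X)"
      using gh geo.span_sub_P[OF B gXP] by (force simp: image_image)
    finally show "g ` span P L X \<subseteq> span P' L' (g ` X)" .
  qed
  have gbij: "bij_betw g P P'"
    by (rule bij_betw_byWitness[where f'=h]) (use hg gh g1 h1 in auto)
  have Lmap: "(\<lambda>l. g ` l) ` L = L'"
  proof
    show "(\<lambda>l. g ` l) ` L \<subseteq> L'"
    proof
      fix l' assume "l' \<in> (\<lambda>l. g ` l) ` L"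
      then obtain l where l: "l \<in> L" "l' = g ` l" by blast
      obtain p q where pq: "p \<in> l" "q \<in> l" "p \<noteq> q" "l = span P L {p, q}"
        using geo.line_is_span[OF A l(1)] by blast
      have pqP: "p \<in> P" "q \<in> P" using pq geo.line_sub[OF A l(1)] by auto
      have gpq: "g p \<in> P'" "g q \<in> P'" "g p \<noteq> g q" using g1 hg pqP pq(3) by metis+
      have "l' = span P' L' {g p, g q}" using l(2) pq(4) glines[OF pqP pq(3)] by simp
      also have "\<dots> = line_through L' (g p) (g q)" by (rule geo.span_pair_line[OF B gpq])
      finally show "l' \<in> L'" using geo.lt_props[OF B gpq] by simp
    qed
    show "L' \<subseteq> (\<lambda>l. g ` l) ` L"
    proof
      fix l' assume l': "l' \<in> L'"
      obtain a b where ab: "a \<in> l'" "b \<in> l'" "a \<noteq> b" "l' = span P' L' {a, b}"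
        using geo.line_is_span[OF B l'] by blast
      have abP: "a \<in> P'" "b \<in> P'" using ab geo.line_sub[OF B l'] by auto
      have hab: "h a \<in> P" "h b \<in> P" "h a \<noteq> h b" using h1 gh abP ab(3) by metis+
      have "g ` span P L {h a, h b} = span P' L' {g (h a), g (h b)}" by (rule glines[OF hab])
      then have e: "g ` span P L {h a, h b} = l'" using gh abP ab(4) by simp
      have "span P L {h a, h b} = line_through L (h a) (h b)" by (rule geo.span_pair_line[OF A hab])
      then have "span P L {h a, h b} \<in> L" using geo.lt_props[OF A hab] by simp
      then show "l' \<in> (\<lambda>l. g ` l) ` L" using e by blast
    qed
  qed
  have coll: "collineation P L P' L' g" unfolding collineation_def using gbij Lmap by blast
  have "f S = g ` S" if S: "S \<in> Grass P L k" for S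
  proof -
    obtain X where X: "independent P L X" "finite X" "card X = k + 1" "span P L X = S"
      using geo.grass_char[OF A] S by blast
    obtain B where B0: "base P L B" "X \<subseteq> B" using geo.extend[OF A X(1,2)] by blast
    have XS: "X \<in> Sk B (k + 1)" using B0(2) X(3) unfolding Sk_def by blast
    have "\<forall>X\<in>Sk B (k + 1). f (span P L X) = span P' L' (g ` X)"
      using g2[rule_format, OF B0(1)] by blast
    then have "f (span P L X) = span P' L' (g ` X)" using XS by blast
    then have "f S = span P' L' (g ` X)" using X(4) by simp
    also have "\<dots> = g ` span P L X" using gsp geo.indep_sub_P[OF A X(1)] by simp
    finally show ?thesis using X(4) by simp
  qed
  then show ?thesis using coll by blast
qed


end
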